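(* Let $n\ge 1$ and let $\alpha,\beta,\gamma,\alpha_i,\beta_i,\gamma_i\in\widehat{\mathbb{F}_q^\times}$ ($1\le i\le n$). (i) For all $\lambda_1,\dots,\lambda_n\in\mathbb{F}_q$, $$-g(\alpha)\,F_A^{(n)}\!\left({\alpha;\beta_1,\dots,\beta_n\atop \gamma_1,\dots,\gamma_n};\lambda_1,\dots,\lambda_n\right)=\sum_{t\in\mathbb{F}_q^\times}\psi(t)\alpha(t)\prod_{i=1}^n {}_1F_1\!\left({\beta_i\atop\gamma_i};\lambda_i t\right).$$ (ii) For all $\lambda_1,\dots,\lambda_n\in\mathbb{F}_q$, $$-\frac{q}{g^\circ(\gamma)}\,F_B^{(n)}\!\left({\alpha_1,\dots,\alpha_n;\beta_1,\dots,\beta_n\atop \gamma};\lambda_1,\dots,\lambda_n\right)=\sum_{t\in\mathbb{F}_q^\times}\psi(-t)\overline{\gamma}(t)\prod_{i=1}^n {}_2F_0\!\left({\alpha_i,\beta_i\atop -};\frac{\lambda_i}{t}\right).$$ (iii) Suppose $p\neq 2$. For all $\lambda_1,\dots,\lambda_n\in\mathbb{F}_q$, $$-g(\alpha^2)\,F_C^{(n)}\!\left({\alpha;\alpha\phi\atop \beta_1,\dots,\beta_n};\lambda_1,\dots,\lambda_n\right)=\sum_{t\in\mathbb{F}_q^\times}\psi(t)\alpha^2(t)\prod_{i=1}^n {}_0F_1\!\left({-\atop\beta_i};\frac{\lambda_i t^2}{4}\right).$$ (iv) For all $\lambda_1,\dots,\lambda_n\in\mathbb{F}_q$, $$g(\alpha)g(\beta)\,F_C^{(n)}\!\left({\alpha;\beta\atop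 \gamma_1,\dots,\gamma_n};\lambda_1,\dots,\lambda_n\right)=\sum_{s,t\in\mathbb{F}_q^\times}\psi(s+t)\alpha(s)\beta(t)\prod_{i=1}^n {}_0F_1\!\left({-\atop\gamma_i};\lambda_i st\right).$$
   Context: $\mathbb{F}_q$ is a finite field with $q$ elements and characteristic $p$. $\widehat{\mathbb{F}_q^\times}=\mathrm{Hom}(\mathbb{F}_q^\times,\overline{\mathbb{Q}}^\times)$ is the group of multiplicative characters; $\varepsilon$ is the trivial character and $\phi$ the quadratic character (used only when $p\ne2$). Every character $\eta$ (including $\varepsilon$) is extended by $\eta(0)=0$; $\overline{\eta}=\eta^{-1}$; $\delta(\eta)=1$ if $\eta=\varepsilon$ and $0$ otherwise. A non-trivial additive character $\psi$ of $\mathbb{F}_q$ is fixed. Gauss sums: $g(\eta)=-\sum_{x\in\mathbb{F}_q^\times}\psi(x)\eta(x)$ and $g^\circ(\eta)=q^{\delta(\eta)}g(\eta)$. Pochhammer analogues: $(\alpha)_\nu=g(\alpha\nu)/g(\alpha)$, $(\alpha)^\circ_\nu=g^\circ(\alpha\nu)/g^\circ(\alpha)$. For characters $\alpha_1,\dots,\alpha_m,\beta_1,\dots,\beta_n$ and $\lambda\in\mathbb{F}_q$, $${}_mF_n\!\left({\alpha_1,\dots,\alpha_m\atop\beta_1,\dots,\beta_n};\lambda\right)=\frac{1}{1-q}\sum_{\nu\in\widehat{\mathbb{F}_q^\times}}\frac{(\alpha_1)_\nu\cdots(\alpha_m)_\nu}{(\varepsilon)^\circ_\nu(\beta_1)^\circ_\nu\cdots(\beta_n)^\circ_\nu}\nu(\lambda)$$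 (an empty list of parameters is written $-$). Lauricella functions over $\mathbb{F}_q$: for $\lambda_i\in\mathbb{F}_q$, with all sums over $\nu_1,\dots,\nu_n\in\widehat{\mathbb{F}_q^\times}$ and $P=\prod_{i}\frac{\nu_i(\lambda_i)}{(\varepsilon)^\circ_{\nu_i}}$, $F_A^{(n)}\!\left({\alpha;\beta_1,\dots,\beta_n\atop\gamma_1,\dots,\gamma_n};\lambda\right)=\frac{1}{(1-q)^n}\sum\frac{(\alpha)_{\nu_1\cdots\nu_n}\prod_i(\beta_i)_{\nu_i}}{\prod_i(\gamma_i)^\circ_{\nu_i}}P$, $F_B^{(n)}\!\left({\alpha_1,\dots,\alpha_n;\beta_1,\dots,\beta_n\atop\gamma};\lambda\right)=\frac{1}{(1-q)^n}\sum\frac{\prod_i(\alpha_i)_{\nu_i}(\beta_i)_{\nu_i}}{(\gamma)^\circ_{\nu_1\cdots\nu_n}}P$, $F_C^{(n)}\!\left({\alpha;\beta\atop\gamma_1,\dots,\gamma_n};\lambda\right)=\frac{1}{(1-q)^n}\sum\frac{(\alpha)_{\nu_1\cdots\nu_n}(\beta)_{\nu_1\cdots\nu_n}}{\prod_i(\gamma_i)^\circ_{\nu_i}}P$. *)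

theory Defs
  imports Complex_Main "HOL-Library.FuncSet"
begin

text \<open>Finite field: a type of class field and finite. q = CARD('a).
Multiplicative characters are extended by 0 at 0; values taken in the complex
numbers (which contain the algebraic numbers).\<close>

definition mult_char :: "('a::{field,finite} \<Rightarrow> complex) \<Rightarrow> bool" where
  "mult_char \<chi> \<longleftrightarrow> \<chi> 0 = 0 \<and> \<chi> 1 = 1 \<and> (\<forall>x. x \<noteq> 0 \<longrightarrow> \<chi> x \<noteq> 0) \<and>
     (\<forall>x y. x \<noteq> 0 \<longrightarrow> y \<noteq> 0 \<longrightarrow> \<chi> (x * y) = \<chi> x * \<chi> y)"

definition mchars :: "('a::{field,finite} \<Rightarrow> complex) set" where
  "mchars = {\<chi>. mult_char \<chi>}"

definition nontriv_add_char :: "('a::{field,finite} \<Rightarrow> complex) \<Rightarrow> bool" where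
  "nontriv_add_char \<psi> \<longleftrightarrow> (\<forall>x. \<psi> x \<noteq> 0) \<and> (\<forall>x y. \<psi> (x + y) = \<psi> x * \<psi> y) \<and> (\<exists>x. \<psi> x \<noteq> 1)"

definition triv_char :: "'a::{field,finite} \<Rightarrow> complex" ("\<epsilon>") where
  "triv_char x = (if x = 0 then 0 else 1)"

definition cmul :: "('a \<Rightarrow> complex) \<Rightarrow> ('a \<Rightarrow> complex) \<Rightarrow> 'a \<Rightarrow> complex" where
  "cmul \<alpha> \<beta> = (\<lambda>x. \<alpha> x * \<beta> x)"

definition cconj :: "('a \<Rightarrow> complex) \<Rightarrow> 'a \<Rightarrow> complex" where
  "cconj \<alpha> = (\<lambda>x. inverse (\<alpha> x))"

definition cprod :: "nat \<Rightarrow> (nat \<Rightarrow> 'a \<Rightarrow> complex) \<Rightarrow> 'a \<Rightarrow> complex" where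
  "cprod n \<nu> = (\<lambda>x. \<Prod>i\<in>{1..n}. \<nu> i x)"

text \<open>Quadratic character (meaningful when the characteristic is not 2).\<close>
definition quad_char :: "'a::{field,finite} \<Rightarrow> complex" where
  "quad_char x = (if x = 0 then 0 else if (\<exists>y. y ^ 2 = x) then 1 else -1)"

definition kdelta :: "('a::{field,finite} \<Rightarrow> complex) \<Rightarrow> nat" where
  "kdelta \<eta> = (if \<eta> = \<epsilon> then 1 else 0)"

definition gauss :: "('a::{field,finite} \<Rightarrow> complex) \<Rightarrow> ('a \<Rightarrow> complex) \<Rightarrow> complex" where
  "gauss \<psi> \<eta> = - (\<Sum>x\<in>UNIV - {0}. \<psi> x * \<eta> x)"

definition gauss0 :: "('a::{field,finite} \<Rightarrow> complex) \<Rightarrow> ('a \<Rightarrow> complex) \<Rightarrow> complex" where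
  "gauss0 \<psi> \<eta> = of_nat (card (UNIV :: 'a set)) ^ kdelta \<eta> * gauss \<psi> \<eta>"

definition poch :: "('a::{field,finite} \<Rightarrow> complex) \<Rightarrow> ('a \<Rightarrow> complex) \<Rightarrow> ('a \<Rightarrow> complex) \<Rightarrow> complex" where
  "poch \<psi> \<alpha> \<nu> = gauss \<psi> (cmul \<alpha> \<nu>) / gauss \<psi> \<alpha>"

definition poch0 :: "('a::{field,finite} \<Rightarrow> complex) \<Rightarrow> ('a \<Rightarrow> complex) \<Rightarrow> ('a \<Rightarrow> complex) \<Rightarrow> complex" where
  "poch0 \<psi> \<alpha> \<nu> = gauss0 \<psi> (cmul \<alpha> \<nu>) / gauss0 \<psi> \<alpha>"

text \<open>Generalized hypergeometric function mFn; parameter lists as lists (empty list = "-").\<close>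
definition hyp :: "('a::{field,finite} \<Rightarrow> complex) \<Rightarrow> ('a \<Rightarrow> complex) list \<Rightarrow> ('a \<Rightarrow> complex) list \<Rightarrow> 'a \<Rightarrow> complex" where
  "hyp \<psi> as bs lam = 1 / (1 - of_nat (card (UNIV :: 'a set))) *
     (\<Sum>\<nu>\<in>mchars. (\<Prod>a\<leftarrow>as. poch \<psi> a \<nu>) /
        (poch0 \<psi> \<epsilon> \<nu> * (\<Prod>b\<leftarrow>bs. poch0 \<psi> b \<nu>)) * \<nu> lam)"

definition lauP :: "('a::{field,finite} \<Rightarrow> complex) \<Rightarrow> nat \<Rightarrow> (nat \<Rightarrow> 'a \<Rightarrow> complex) \<Rightarrow> (nat \<Rightarrow> 'a) \<Rightarrow> complex" where
  "lauP \<psi> n \<nu> lam = (\<Prod>i\<in>{1..n}. \<nu> i (lam i) / poch0 \<psi> \<epsilon> (\<nu> i))"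

definition lauricella_A :: "('a::{field,finite} \<Rightarrow> complex) \<Rightarrow> nat \<Rightarrow> ('a \<Rightarrow> complex) \<Rightarrow>
    (nat \<Rightarrow> 'a \<Rightarrow> complex) \<Rightarrow> (nat \<Rightarrow> 'a \<Rightarrow> complex) \<Rightarrow> (nat \<Rightarrow> 'a) \<Rightarrow> complex" where
  "lauricella_A \<psi> n \<alpha> \<beta> \<gamma> lam = 1 / (1 - of_nat (card (UNIV :: 'a set))) ^ n *
     (\<Sum>\<nu>\<in>PiE {1..n} (\<lambda>_. mchars).
        poch \<psi> \<alpha> (cprod n \<nu>) * (\<Prod>i\<in>{1..n}. poch \<psi> (\<beta> i) (\<nu> i)) /
        (\<Prod>i\<in>{1..n}. poch0 \<psi> (\<gamma> i) (\<nu> i)) * lauP \<psi> n \<nu> lam)"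

definition lauricella_B :: "('a::{field,finite} \<Rightarrow> complex) \<Rightarrow> nat \<Rightarrow> (nat \<Rightarrow> 'a \<Rightarrow> complex) \<Rightarrow>
    (nat \<Rightarrow> 'a \<Rightarrow> complex) \<Rightarrow> ('a \<Rightarrow> complex) \<Rightarrow> (nat \<Rightarrow> 'a) \<Rightarrow> complex" where
  "lauricella_B \<psi> n \<alpha> \<beta> \<gamma> lam = 1 / (1 - of_nat (card (UNIV :: 'a set))) ^ n *
     (\<Sum>\<nu>\<in>PiE {1..n} (\<lambda>_. mchars).
        (\<Prod>i\<in>{1..n}. poch \<psi> (\<alpha> i) (\<nu> i) * poch \<psi> (\<beta> i) (\<nu> i)) /
        poch0 \<psi> \<gamma> (cprod n \<nu>) * lauP \<psi> n \<nu> lam)"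

definition lauricella_C :: "('a::{field,finite} \<Rightarrow> complex) \<Rightarrow> nat \<Rightarrow> ('a \<Rightarrow> complex) \<Rightarrow>
    ('a \<Rightarrow> complex) \<Rightarrow> (nat \<Rightarrow> 'a \<Rightarrow> complex) \<Rightarrow> (nat \<Rightarrow> 'a) \<Rightarrow> complex" where
  "lauricella_C \<psi> n \<alpha> \<beta> \<gamma> lam = 1 / (1 - of_nat (card (UNIV :: 'a set))) ^ n *
     (\<Sum>\<nu>\<in>PiE {1..n} (\<lambda>_. mchars).
        poch \<psi> \<alpha> (cprod n \<nu>) * poch \<psi> \<beta> (cprod n \<nu>) /
        (\<Prod>i\<in>{1..n}. poch0 \<psi> (\<gamma> i) (\<nu> i)) * lauP \<psi> n \<nu> lam)"

end

theory Submission
  imports Defs "HOL-Library.Cardinality"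
begin


lemma mc_0: "\<chi> \<in> mchars \<Longrightarrow> \<chi> 0 = 0" by (simp add: mchars_def mult_char_def)
lemma mc_1: "\<chi> \<in> mchars \<Longrightarrow> \<chi> 1 = 1" by (simp add: mchars_def mult_char_def)
lemma mc_nz: "\<chi> \<in> mchars \<Longrightarrow> x \<noteq> 0 \<Longrightarrow> \<chi> x \<noteq> 0" by (simp add: mchars_def mult_char_def)
lemma mc_mult: "\<chi> \<in> mchars \<Longrightarrow> \<chi> (x * y) = \<chi> x * \<chi> y"
  by (cases "x = 0"; cases "y = 0") (auto simp: mchars_def mult_char_def)

lemma mc_pow: "\<chi> \<in> mchars \<Longrightarrow> \<chi> (x ^ k) = \<chi> x ^ k"
  by (induction k) (simp_all add: mc_1 mc_mult)

lemma mc_inverse: assumes c: "\<chi> \<in> mchars" shows "\<chi> (inverse x) = inverse (\<chi> x)"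
proof (cases "x = 0")
  case True then show ?thesis by (simp add: mc_0[OF c])
next
  case False
  have "\<chi> x * \<chi> (inverse x) = 1" using False c by (simp flip: mc_mult add: mc_1)
  then show ?thesis by (metis inverse_unique)
qed

lemma mc_divide: "\<chi> \<in> mchars \<Longrightarrow> \<chi> (x / y) = \<chi> x / \<chi> y"
  by (simp add: divide_inverse mc_mult mc_inverse)

lemma mc_neg1: "\<chi> \<in> mchars \<Longrightarrow> \<chi> (-1) * \<chi> (-1) = 1"
  by (simp flip: mc_mult add: mc_1)

lemma mc_neg1_inv: "\<chi> \<in> mchars \<Longrightarrow> inverse (\<chi> (-1)) = \<chi> (-1)"
  using mc_neg1[of \<chi>] by (metis inverse_unique)

lemma eps_mchars: "\<epsilon> \<in> mchars"
  by (simp add: mchars_def mult_char_def triv_char_def)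

lemma cmul_mchars: "\<alpha> \<in> mchars \<Longrightarrow> \<beta> \<in> mchars \<Longrightarrow> cmul \<alpha> \<beta> \<in> mchars"
  unfolding mchars_def mult_char_def cmul_def by auto

lemma cconj_mchars: "\<alpha> \<in> mchars \<Longrightarrow> cconj \<alpha> \<in> mchars"
  unfolding mchars_def mult_char_def cconj_def by auto

lemma cmul_comm: "cmul \<alpha> \<beta> = cmul \<beta> \<alpha>" by (simp add: cmul_def mult.commute)
lemma cmul_assoc: "cmul (cmul \<alpha> \<beta>) \<gamma> = cmul \<alpha> (cmul \<beta> \<gamma>)" by (simp add: cmul_def mult.assoc)
lemma cmul_eps: "\<alpha> \<in> mchars \<Longrightarrow> cmul \<alpha> \<epsilon> = \<alpha>"
  by (rule ext) (simp add: cmul_def triv_char_def mc_0)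
lemma eps_cmul: "\<alpha> \<in> mchars \<Longrightarrow> cmul \<epsilon> \<alpha> = \<alpha>"
  by (metis cmul_comm cmul_eps)
lemma cconj_eps: "cconj \<epsilon> = (\<epsilon> :: 'a::{field,finite} \<Rightarrow> complex)"
  by (rule ext) (simp add: cconj_def triv_char_def)

lemma cprod_mchars:
  assumes "n \<ge> 1" "\<nu> \<in> PiE {1..n} (\<lambda>_. mchars)"
  shows "cprod n \<nu> \<in> mchars"
proof -
  have nu: "\<And>i. i \<in> {1..n} \<Longrightarrow> \<nu> i \<in> mchars" using assms(2) by auto
  have "cprod n \<nu> (0::'a) = 0"
    unfolding cprod_def using assms(1) nu by (auto simp: mc_0 intro!: prod_zero bexI[of _ 1])
  moreover have "cprod n \<nu> 1 = 1" unfolding cprod_def using nu by (simp add: mc_1)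
  moreover have "\<And>x. x \<noteq> 0 \<Longrightarrow> cprod n \<nu> x \<noteq> 0" unfolding cprod_def using nu by (simp add: mc_nz)
  moreover have "\<And>x y. cprod n \<nu> (x * y) = cprod n \<nu> x * cprod n \<nu> y"
    unfolding cprod_def using nu by (simp add: mc_mult prod.distrib)
  ultimately show ?thesis by (simp add: mchars_def mult_char_def)
qed

lemma cprod_apply_mult: "cprod n \<nu> (x * y) = cprod n \<nu> x * cprod n \<nu> y"
  if "\<nu> \<in> PiE {1..n} (\<lambda>_. mchars)"
proof -
  have nu: "\<And>i. i \<in> {1..n} \<Longrightarrow> \<nu> i \<in> mchars" using that by auto
  show ?thesis unfolding cprod_def using nu by (simp add: mc_mult prod.distrib)
qed

lemma ff_fermat:
  fixes x :: "'a::{field,finite}"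
  assumes "x \<noteq> 0"
  shows "x ^ (CARD('a) - 1) = 1"
proof -
  let ?U = "UNIV - {0::'a}"
  have bij: "bij_betw (\<lambda>y. x * y) ?U ?U"
    using assms by (intro bij_betwI[where g="\<lambda>y. y / x"]) auto
  have "(\<Prod>y\<in>?U. x * y) = (\<Prod>y\<in>?U. y)" using prod.reindex_bij_betw[OF bij, of id] by simp
  moreover have "(\<Prod>y\<in>?U. x * y) = x ^ card ?U * (\<Prod>y\<in>?U. y)"
    by (simp add: prod.distrib)
  moreover have "(\<Prod>y\<in>?U. y) \<noteq> 0" by simp
  moreover have "card ?U = CARD('a) - 1" by (simp add: card_Diff_singleton)
  ultimately show ?thesis by simp
qed

lemma card_ge2: "CARD('a::{field,finite}) \<ge> 2"
proof -
  have "{0::'a, 1} \<subseteq> UNIV" by simp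
  then have "card {0::'a,1} \<le> CARD('a)" by (rule card_mono[rotated]) simp
  then show ?thesis by simp
qed

lemma mc_root: fixes x :: "'a::{field,finite}" shows "\<chi> \<in> mchars \<Longrightarrow> x \<noteq> 0 \<Longrightarrow> \<chi> x ^ (CARD('a) - 1) = 1"
  by (metis ff_fermat mc_1 mc_pow)

lemma finite_mchars: "finite (mchars :: ('a::{field,finite} \<Rightarrow> complex) set)"
proof -
  let ?R = "insert 0 {z::complex. z ^ (CARD('a) - 1) = 1}"
  have fR: "finite ?R" using card_ge2[where 'a='a] by (auto intro!: finite_roots_unity)
  have "mchars \<subseteq> PiE (UNIV::'a set) (\<lambda>_. ?R)"
  proof
    fix \<chi> :: "'a \<Rightarrow> complex" assume c: "\<chi> \<in> mchars"
    have "\<chi> x \<in> ?R" for x using mc_root[OF c, of x] mc_0[OF c] by (cases "x = 0") auto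
    then show "\<chi> \<in> PiE UNIV (\<lambda>_. ?R)" by auto
  qed
  moreover have "finite (PiE (UNIV::'a set) (\<lambda>_. ?R))" using fR by (intro finite_PiE) auto
  ultimately show ?thesis by (rule finite_subset)
qed

lemma sum_drop0: "f 0 = 0 \<Longrightarrow> (\<Sum>x\<in>UNIV - {0::'a::{zero,finite}}. f x) = (\<Sum>x\<in>UNIV. f x)"
  by (rule sum.mono_neutral_left) auto

lemma char_sum:
  fixes \<chi> :: "'a::{field,finite} \<Rightarrow> complex"
  assumes c: "\<chi> \<in> mchars"
  shows "(\<Sum>x\<in>UNIV. \<chi> x) = (if \<chi> = \<epsilon> then of_nat (CARD('a) - 1) else 0)"
proof (cases "\<chi> = \<epsilon>")
  case True
  have "(\<Sum>x\<in>UNIV. \<epsilon> (x::'a)) = (\<Sum>x\<in>UNIV - {0::'a}. \<epsilon> x)"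
    using sum_drop0[of "\<epsilon> :: 'a \<Rightarrow> complex"] by (simp add: triv_char_def)
  also have "\<dots> = (\<Sum>x\<in>UNIV - {0::'a}. 1)" by (rule sum.cong) (auto simp: triv_char_def)
  finally have "(\<Sum>x\<in>UNIV. \<epsilon> (x::'a)) = (\<Sum>x\<in>UNIV - {0::'a}. 1)" .
  then show ?thesis using True by (simp add: card_Diff_singleton)
next
  case False
  then obtain a where a: "\<chi> a \<noteq> \<epsilon> a" by auto
  then have a0: "a \<noteq> 0" using mc_0[OF c] by (auto simp: triv_char_def)
  with a have a1: "\<chi> a \<noteq> 1" by (simp add: triv_char_def)
  have bij: "bij_betw (\<lambda>y. a * y) UNIV UNIV"
    using a0 by (intro bij_betwI[where g="\<lambda>y. y / a"]) auto
  have "(\<Sum>x\<in>UNIV. \<chi> (a * x)) = (\<Sum>x\<in>UNIV. \<chi> x)" by (rule sum.reindex_bij_betw[OF bij])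
  then have "\<chi> a * (\<Sum>x\<in>UNIV. \<chi> x) = (\<Sum>x\<in>UNIV. \<chi> x)" by (simp add: mc_mult[OF c] sum_distrib_left)
  then have "(\<chi> a - 1) * (\<Sum>x\<in>UNIV. \<chi> x) = 0" by (simp add: algebra_simps)
  then show ?thesis using False a1 by simp
qed




locale addc =
  fixes \<psi> :: "'a::{field,finite} \<Rightarrow> complex"
  assumes psi: "nontriv_add_char \<psi>"
begin


lemma psi_add: "\<psi> (x + y) = \<psi> x * \<psi> y" using psi by (simp add: nontriv_add_char_def)
lemma psi_nz: "\<psi> x \<noteq> 0" using psi by (simp add: nontriv_add_char_def)
lemma psi0: "\<psi> 0 = 1"
proof -
  have "\<psi> 0 * \<psi> 0 = \<psi> 0 * 1" using psi_add[of 0 0] by simp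
  then show ?thesis using psi_nz[of 0] by (metis mult_left_cancel)
qed

lemma psi_sum: "(\<Sum>x\<in>UNIV. \<psi> x) = 0"
proof -
  obtain a where a: "\<psi> a \<noteq> 1" using psi by (auto simp: nontriv_add_char_def)
  have bij: "bij_betw (\<lambda>y. y + a) UNIV UNIV"
    by (intro bij_betwI[where g="\<lambda>y. y - a"]) auto
  have "(\<Sum>x\<in>UNIV. \<psi> (x + a)) = (\<Sum>x\<in>UNIV. \<psi> x)" by (rule sum.reindex_bij_betw[OF bij])
  then have "\<psi> a * (\<Sum>x\<in>UNIV. \<psi> x) = (\<Sum>x\<in>UNIV. \<psi> x)" by (simp add: psi_add sum_distrib_left mult.commute)
  then have "(\<psi> a - 1) * (\<Sum>x\<in>UNIV. \<psi> x) = 0" by (simp add: algebra_simps)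
  then show ?thesis using a by simp
qed

lemma psi_sum_scale: "c \<noteq> 0 \<Longrightarrow> (\<Sum>x\<in>UNIV. \<psi> (c * x)) = 0"
proof -
  assume c: "c \<noteq> 0"
  have bij: "bij_betw (\<lambda>y. c * y) UNIV UNIV"
    using c by (intro bij_betwI[where g="\<lambda>y. y / c"]) auto
  show ?thesis using sum.reindex_bij_betw[OF bij, of \<psi>] psi_sum by simp
qed

lemma sum_U: "(\<Sum>x\<in>UNIV. f x) = f 0 + (\<Sum>x\<in>UNIV - {0::'a}. f x)"
  by (simp add: sum.remove[of UNIV 0])

lemma psi_sumU: "(\<Sum>x\<in>UNIV - {0}. \<psi> (c * x)) = (if c = 0 then of_nat CARD('a) - 1 else -1)"
proof (cases "c = 0")
  case True
  then show ?thesis by (simp add: psi0 card_Diff_singleton)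
next
  case False
  then show ?thesis using psi_sum_scale[OF False] sum_U[of "\<lambda>x. \<psi> (c * x)"] psi0
    by (simp add: eq_neg_iff_add_eq_0 add.commute)
qed

lemma gauss_UNIV: "\<chi> \<in> mchars \<Longrightarrow> gauss \<psi> \<chi> = - (\<Sum>x\<in>UNIV. \<psi> x * \<chi> x)"
  unfolding gauss_def by (subst sum_drop0) (auto simp: mc_0)

lemma gauss_eps: "gauss \<psi> \<epsilon> = 1"
proof -
  have "gauss \<psi> \<epsilon> = - (\<Sum>x\<in>UNIV - {0}. \<psi> (1 * x))"
    unfolding gauss_def by (intro arg_cong[where f=uminus] sum.cong) (auto simp: triv_char_def)
  then show ?thesis by (simp only: psi_sumU) simp
qed

lemma twist:
  assumes c: "\<chi> \<in> mchars" and c0: "c \<noteq> 0"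
  shows "(\<Sum>x\<in>UNIV. \<psi> (c * x) * \<chi> x) = - inverse (\<chi> c) * gauss \<psi> \<chi>"
proof -
  have bij: "bij_betw (\<lambda>y. c * y) UNIV UNIV"
    using c0 by (intro bij_betwI[where g="\<lambda>y. y / c"]) auto
  have "(\<Sum>x\<in>UNIV. \<psi> (c * x) * \<chi> x) = (\<Sum>x\<in>UNIV. (\<lambda>y. \<psi> y * \<chi> (y / c)) (c * x))"
    using c0 by simp
  also have "\<dots> = (\<Sum>y\<in>UNIV. \<psi> y * \<chi> (y / c))" by (rule sum.reindex_bij_betw[OF bij])
  also have "\<dots> = inverse (\<chi> c) * (\<Sum>y\<in>UNIV. \<psi> y * \<chi> y)"
    by (simp add: mc_mult[OF c] mc_inverse[OF c] sum_distrib_left divide_inverse mult_ac)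
  finally show ?thesis by (simp add: gauss_UNIV[OF c])
qed

lemma gauss_pair:
  assumes c: "\<chi> \<in> mchars" and ne: "\<chi> \<noteq> \<epsilon>"
  shows "gauss \<psi> \<chi> * gauss \<psi> (cconj \<chi>) = \<chi> (-1) * of_nat CARD('a)"
proof -
  have cc: "cconj \<chi> \<in> mchars" by (rule cconj_mchars[OF c])
  have "gauss \<psi> \<chi> * gauss \<psi> (cconj \<chi>) = (\<Sum>x\<in>UNIV. \<psi> x * \<chi> x) * (\<Sum>y\<in>UNIV - {0}. \<psi> y * cconj \<chi> y)"
    unfolding gauss_def using sum_drop0[of "\<lambda>x. \<psi> x * \<chi> x"] by (simp add: mc_0[OF c])
  also have "\<dots> = (\<Sum>y\<in>UNIV - {0}. \<Sum>x\<in>UNIV. \<psi> x * \<chi> x * (\<psi> y * cconj \<chi> y))"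
    by (simp add: sum_product sum.swap[of _ "UNIV - {0}"])
  also have "\<dots> = (\<Sum>y\<in>UNIV - {0}. \<Sum>u\<in>UNIV. \<psi> (y * (u + 1)) * \<chi> u)"
  proof (rule sum.cong[OF refl])
    fix y :: 'a assume y: "y \<in> UNIV - {0}"
    have bij: "bij_betw (\<lambda>u. y * u) UNIV UNIV"
      using y by (intro bij_betwI[where g="\<lambda>u. u / y"]) auto
    have "(\<Sum>x\<in>UNIV. \<psi> x * \<chi> x * (\<psi> y * cconj \<chi> y)) = (\<Sum>u\<in>UNIV. (\<lambda>x. \<psi> x * \<chi> x * (\<psi> y * cconj \<chi> y)) (y * u))"
      by (rule sum.reindex_bij_betw[OF bij, symmetric])
    also have "\<dots> = (\<Sum>u\<in>UNIV. \<psi> (y * (u + 1)) * \<chi> u)"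
    proof (rule sum.cong[OF refl])
      fix u
      have "\<chi> y * cconj \<chi> y = 1" using mc_nz[OF c, of y] y by (simp add: cconj_def)
      then show "\<psi> (y * u) * \<chi> (y * u) * (\<psi> y * cconj \<chi> y) = \<psi> (y * (u + 1)) * \<chi> u"
        by (simp add: mc_mult[OF c] psi_add distrib_left)
    qed
    finally show "(\<Sum>x\<in>UNIV. \<psi> x * \<chi> x * (\<psi> y * cconj \<chi> y)) = (\<Sum>u\<in>UNIV. \<psi> (y * (u + 1)) * \<chi> u)" .
  qed
  also have "\<dots> = (\<Sum>u\<in>UNIV. \<chi> u * (\<Sum>y\<in>UNIV - {0}. \<psi> ((u + 1) * y)))"
    by (subst sum.swap) (simp add: sum_distrib_left mult.commute)
  also have "\<dots> = (\<Sum>u\<in>UNIV. \<chi> u * (if u = -1 then of_nat CARD('a) else 0) - \<chi> u)"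
    by (intro sum.cong refl, simp only: psi_sumU) (auto simp: eq_neg_iff_add_eq_0 algebra_simps)
  also have "\<dots> = \<chi> (-1) * of_nat CARD('a)"
    using char_sum[OF c] ne by (simp add: sum_subtractf if_distrib[of "\<lambda>v. \<chi> _ * v"] sum.delta cong: if_cong)
  finally show ?thesis .
qed

end



definition jac :: "('a::{field,finite} \<Rightarrow> complex) \<Rightarrow> ('a \<Rightarrow> complex) \<Rightarrow> complex" where
  "jac a b = (\<Sum>x\<in>UNIV. a x * b (1 - x))"

lemma card_nz: "(of_nat CARD('a::{field,finite}) :: complex) \<noteq> 0"
  using card_ge2[where 'a='a] by simp

lemma eps_neg1: "(\<epsilon> (-1 :: 'a::{field,finite})) = 1" by (simp add: triv_char_def)

context addc begin

lemma gauss_nz: assumes c: "\<chi> \<in> mchars" shows "gauss \<psi> \<chi> \<noteq> 0"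
proof (cases "\<chi> = \<epsilon>")
  case True then show ?thesis by (simp add: gauss_eps)
next
  case False
  have "\<chi> (-1) * of_nat CARD('a) \<noteq> 0" using mc_nz[OF c, of "-1"] card_nz[where 'a='a] by simp
  then show ?thesis using gauss_pair[OF c False] by auto
qed

lemma gauss0_pair: assumes c: "\<chi> \<in> mchars"
  shows "gauss0 \<psi> \<chi> * gauss \<psi> (cconj \<chi>) = \<chi> (-1) * of_nat CARD('a)"
proof (cases "\<chi> = \<epsilon>")
  case True then show ?thesis by (simp add: gauss0_def kdelta_def cconj_eps gauss_eps eps_neg1)
next
  case False then show ?thesis using gauss_pair[OF c False] by (simp add: gauss0_def kdelta_def)
qed

lemma gauss0_nz: assumes c: "\<chi> \<in> mchars" shows "gauss0 \<psi> \<chi> \<noteq> 0"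
  using gauss_nz[OF c] card_nz[where 'a='a] by (simp add: gauss0_def)

lemma gauss_jac:
  assumes a: "a \<in> mchars" and b: "b \<in> mchars" and ne: "cmul a b \<noteq> \<epsilon>"
  shows "gauss \<psi> a * gauss \<psi> b = - jac a b * gauss \<psi> (cmul a b)"
proof -
  have ab: "cmul a b \<in> mchars" using a b by (rule cmul_mchars)
  have "gauss \<psi> a * gauss \<psi> b = (\<Sum>x\<in>UNIV. \<Sum>y\<in>UNIV. \<psi> x * a x * (\<psi> y * b y))"
    by (simp add: gauss_UNIV[OF a] gauss_UNIV[OF b] sum_product)
  also have "\<dots> = (\<Sum>x\<in>UNIV. \<Sum>u\<in>UNIV. \<psi> u * (a x * b (u - x)))"
  proof (rule sum.cong[OF refl])
    fix x :: 'a
    have bij: "bij_betw (\<lambda>u. u - x) UNIV UNIV"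
      by (intro bij_betwI[where g="\<lambda>u. u + x"]) auto
    have "(\<Sum>y\<in>UNIV. \<psi> x * a x * (\<psi> y * b y)) = (\<Sum>u\<in>UNIV. (\<lambda>y. \<psi> x * a x * (\<psi> y * b y)) (u - x))"
      by (rule sum.reindex_bij_betw[OF bij, symmetric])
    also have "\<dots> = (\<Sum>u\<in>UNIV. \<psi> u * (a x * b (u - x)))"
    proof (rule sum.cong[OF refl])
      fix u
      have "\<psi> u = \<psi> x * \<psi> (u - x)" using psi_add[of x "u - x"] by simp
      then show "\<psi> x * a x * (\<psi> (u - x) * b (u - x)) = \<psi> u * (a x * b (u - x))" by (simp add: mult_ac)
    qed
    finally show "(\<Sum>y\<in>UNIV. \<psi> x * a x * (\<psi> y * b y)) = (\<Sum>u\<in>UNIV. \<psi> u * (a x * b (u - x)))" .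
  qed
  also have "\<dots> = (\<Sum>u\<in>UNIV. \<psi> u * (\<Sum>x\<in>UNIV. a x * b (u - x)))"
    by (subst sum.swap) (simp add: sum_distrib_left)
  also have "\<dots> = (\<Sum>u\<in>UNIV. \<psi> u * (cmul a b u * jac a b))"
  proof (rule sum.cong[OF refl])
    fix u :: 'a
    show "\<psi> u * (\<Sum>x\<in>UNIV. a x * b (u - x)) = \<psi> u * (cmul a b u * jac a b)"
    proof (cases "u = 0")
      case True
      have "(\<Sum>x\<in>UNIV. a x * b (0 - x)) = (\<Sum>x\<in>UNIV. b (-1) * cmul a b x)"
      proof (rule sum.cong[OF refl])
        fix x :: 'a
        have "b (0 - x) = b (-1) * b x" using mc_mult[OF b, of "-1" x] by simp
        then show "a x * b (0 - x) = b (-1) * cmul a b x" by (simp add: cmul_def mult.left_commute)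
      qed
      also have "\<dots> = 0" using char_sum[OF ab] ne by (simp flip: sum_distrib_left)
      finally show ?thesis using True by (simp add: cmul_def mc_0[OF a])
    next
      case False
      have bij: "bij_betw (\<lambda>s. u * s) UNIV UNIV"
        using False by (intro bij_betwI[where g="\<lambda>s. s / u"]) auto
      have "(\<Sum>x\<in>UNIV. a x * b (u - x)) = (\<Sum>s\<in>UNIV. (\<lambda>x. a x * b (u - x)) (u * s))"
        by (rule sum.reindex_bij_betw[OF bij, symmetric])
      also have "\<dots> = (\<Sum>s\<in>UNIV. cmul a b u * (a s * b (1 - s)))"
      proof (rule sum.cong[OF refl])
        fix s
        have "u - u * s = u * (1 - s)" by (simp add: algebra_simps)
        then show "a (u * s) * b (u - u * s) = cmul a b u * (a s * b (1 - s))"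
          by (simp add: mc_mult[OF a] mc_mult[OF b] cmul_def mult_ac)
      qed
      finally show ?thesis by (simp add: jac_def sum_distrib_left)
    qed
  qed
  also have "\<dots> = jac a b * (\<Sum>u\<in>UNIV. \<psi> u * cmul a b u)"
    by (simp add: sum_distrib_left mult.left_commute mult.commute)
  also have "\<dots> = - jac a b * gauss \<psi> (cmul a b)"
    by (simp add: gauss_UNIV[OF ab])
  finally show ?thesis .
qed

end



definition issq :: "'a::{field,finite} \<Rightarrow> bool" where "issq x \<longleftrightarrow> (\<exists>w. w ^ 2 = x)"

lemma quad_char_issq: "quad_char x = (if x = 0 then 0 else if issq x then 1 else -1)"
  by (simp add: quad_char_def issq_def)

lemma two_nz: "CHAR('a::{field,finite}) \<noteq> 2 \<Longrightarrow> (2::'a) \<noteq> 0"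
proof
  assume c: "CHAR('a) \<noteq> 2" and z: "(2::'a) = 0"
  have "of_nat 2 = (0::'a)" using z by simp
  then have "CHAR('a) dvd 2" by (simp only: of_nat_eq_0_iff_char_dvd)
  moreover have "\<not> CHAR('a) dvd 1" using of_nat_eq_0_iff_char_dvd[where 'a='a, of 1] by simp
  moreover have "CHAR('a) \<noteq> 0" using \<open>CHAR('a) dvd 2\<close> by (metis dvd_0_left_iff zero_neq_numeral)
  moreover have "CHAR('a) \<le> 2" using \<open>CHAR('a) dvd 2\<close> by (simp add: dvd_imp_le)
  ultimately show False using c by (metis dvd_1_left le_antisym less_2_cases not_le)
qed

lemma issq_mult: "issq x \<Longrightarrow> issq y \<Longrightarrow> issq (x * y)"
  unfolding issq_def by (metis power_mult_distrib)

lemma issq_cancel: "issq x \<Longrightarrow> x \<noteq> 0 \<Longrightarrow> issq (x * y) \<longleftrightarrow> issq y"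
proof
  assume "issq x" "x \<noteq> 0" "issq (x * y)"
  then obtain w v where w: "w ^ 2 = x" and v: "v ^ 2 = x * y" by (auto simp: issq_def)
  have "w \<noteq> 0" using w \<open>x \<noteq> 0\<close> by auto
  have "(v / w) ^ 2 = y" using w v \<open>x \<noteq> 0\<close> by (simp add: power_divide)
  then show "issq y" by (auto simp: issq_def)
qed (rule issq_mult)

lemma issq_0: "issq 0" by (auto simp: issq_def)

context
  fixes dummy :: "'a::{field,finite}"
  assumes two: "(2::'a) \<noteq> 0"
begin

lemma sqrt_set: "w \<noteq> 0 \<Longrightarrow> {z::'a. z ^ 2 = w ^ 2} = {w, -w}"
proof -
  have "z ^ 2 = w ^ 2 \<longleftrightarrow> z = w \<or> z = -w" for z :: 'a
  proof -
    have "z ^ 2 - w ^ 2 = (z - w) * (z + w)" by (simp add: algebra_simps power2_eq_square)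
    then show ?thesis by (auto simp: eq_neg_iff_add_eq_0)
  qed
  then show ?thesis by auto
qed

lemma neg_ne: "w \<noteq> 0 \<Longrightarrow> w \<noteq> - (w::'a)"
proof
  assume "w \<noteq> 0" "w = - w"
  then have "w + w = 0" by (metis add.right_inverse)
  then have "2 * w = 0" by (simp only: mult_2)
  then show False using two \<open>w \<noteq> 0\<close> by simp
qed

lemma card_sqrt: "of_nat (card {z::'a. z ^ 2 = y}) = 1 + quad_char y"
proof (cases "y = 0")
  case True
  then have "{z::'a. z ^ 2 = y} = {0}" by auto
  then show ?thesis using True by (simp add: quad_char_def)
next
  case False
  show ?thesis
  proof (cases "issq y")
    case True
    then obtain w where w: "w ^ 2 = y" by (auto simp: issq_def)
    then have "w \<noteq> 0" using False by auto
    then have "{z::'a. z ^ 2 = y} = {w, -w}" using sqrt_set w by auto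
    then show ?thesis using neg_ne[OF \<open>w \<noteq> 0\<close>] False True by (simp add: quad_char_issq)
  next
    case nsq: False
    then have "{z::'a. z ^ 2 = y} = {}" by (auto simp: issq_def)
    then show ?thesis using False nsq by (simp add: quad_char_issq)
  qed
qed

lemma sum_sq: "(\<Sum>z\<in>UNIV. h (z ^ 2 :: 'a)) = (\<Sum>y\<in>UNIV. h y * (1 + quad_char y))"
proof -
  have "(\<Sum>z\<in>UNIV. h (z ^ 2 :: 'a)) = (\<Sum>y\<in>UNIV. \<Sum>z\<in>{z. z \<in> UNIV \<and> z ^ 2 = y}. h (z ^ 2))"
    by (rule sum.group[symmetric]) auto
  also have "\<dots> = (\<Sum>y\<in>UNIV. h y * of_nat (card {z::'a. z ^ 2 = y}))"
    by (intro sum.cong refl) simp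
  finally show ?thesis by (simp add: card_sqrt)
qed

lemma quad_sum: "(\<Sum>y\<in>UNIV. quad_char (y::'a)) = 0"
proof -
  have "(\<Sum>z\<in>UNIV. \<epsilon> (z ^ 2 :: 'a)) = (\<Sum>y\<in>UNIV. \<epsilon> (y::'a) * (1 + quad_char y))" by (rule sum_sq)
  moreover have "(\<Sum>z\<in>UNIV. \<epsilon> (z ^ 2 :: 'a)) = (\<Sum>z\<in>UNIV. \<epsilon> (z::'a))"
    by (intro sum.cong refl) (simp add: triv_char_def)
  moreover have "(\<Sum>y\<in>UNIV. \<epsilon> (y::'a) * (1 + quad_char y)) = (\<Sum>y\<in>UNIV. \<epsilon> (y::'a)) + (\<Sum>y\<in>UNIV. quad_char (y::'a))"
  proof -
    have "\<And>y. \<epsilon> y * (1 + quad_char y) = \<epsilon> y + quad_char (y::'a)" by (simp add: triv_char_def quad_char_def)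
    then show ?thesis by (simp add: sum.distrib)
  qed
  ultimately show ?thesis by simp
qed

lemma card_sq_nsq: "card {y::'a. y \<noteq> 0 \<and> issq y} = card {y::'a. y \<noteq> 0 \<and> \<not> issq y}"
proof -
  let ?S = "{y::'a. y \<noteq> 0 \<and> issq y}" and ?N = "{y::'a. y \<noteq> 0 \<and> \<not> issq y}"
  have U: "UNIV = {0} \<union> (?S \<union> ?N)" by auto
  have "(\<Sum>y\<in>UNIV. quad_char (y::'a)) = (\<Sum>y\<in>{0} \<union> (?S \<union> ?N). quad_char y)"
    by (subst U) (rule refl)
  also have "\<dots> = quad_char (0::'a) + (\<Sum>y\<in>?S \<union> ?N. quad_char y)"
    by (subst sum.union_disjoint) auto
  also have "\<dots> = quad_char (0::'a) + ((\<Sum>y\<in>?S. quad_char y) + (\<Sum>y\<in>?N. quad_char y))"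
    by (subst sum.union_disjoint) auto
  also have "\<dots> = of_nat (card ?S) - of_nat (card ?N)"
    by (simp add: quad_char_issq)
  finally have "(of_nat (card ?S) :: complex) = of_nat (card ?N)" using quad_sum by simp
  then show ?thesis by simp
qed

lemma nsq_mult: fixes a b :: 'a assumes a: "\<not> issq a" and b: "\<not> issq b" shows "issq (a * b)"
proof -
  let ?S = "{y::'a. y \<noteq> 0 \<and> issq y}" and ?N = "{y::'a. y \<noteq> 0 \<and> \<not> issq y}"
  have a0: "a \<noteq> 0" "b \<noteq> 0" using a b issq_0 by auto
  have sub: "(\<lambda>y. a * y) ` ?S \<subseteq> ?N"
    using a0 a by (auto simp: issq_cancel mult.commute)
  have "inj_on (\<lambda>y. a * y) ?S" using a0 by (auto intro: inj_onI)
  then have "card ((\<lambda>y. a * y) ` ?S) = card ?N" using card_sq_nsq by (simp add: card_image)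
  then have "(\<lambda>y. a * y) ` ?S = ?N" using sub by (intro card_subset_eq) auto
  then have "b \<in> (\<lambda>y. a * y) ` ?S" using a0 b by auto
  then obtain y where y: "issq y" "b = a * y" by auto
  have "a * b = a ^ 2 * y" using y by (simp add: power2_eq_square)
  then show ?thesis using y(1) by (metis issq_def issq_mult)
qed

lemma quad_mchars: "quad_char \<in> (mchars :: ('a \<Rightarrow> complex) set)"
proof -
  have "quad_char (x * y) = quad_char x * quad_char (y::'a)" if "x \<noteq> 0" "y \<noteq> 0" for x y
  proof -
    have xy: "x * y \<noteq> 0" using that by simp
    consider "issq x" "issq y" | "issq x" "\<not> issq y" | "\<not> issq x" "issq y" | "\<not> issq x" "\<not> issq y" by blast
    then show ?thesis
    proof cases
      case 1 then show ?thesis using that xy by (simp add: quad_char_issq issq_mult)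
    next
      case 2 then show ?thesis using that xy by (simp add: quad_char_issq issq_cancel)
    next
      case 3 then show ?thesis using that xy by (simp add: quad_char_issq issq_cancel mult.commute[of x y])
    next
      case 4 then show ?thesis using that xy by (simp add: quad_char_issq nsq_mult)
    qed
  qed
  moreover have "issq (1::'a)" by (auto simp: issq_def intro: exI[of _ 1])
  ultimately show ?thesis by (auto simp: mchars_def mult_char_def quad_char_issq)
qed

lemma quad_sq: "x \<noteq> 0 \<Longrightarrow> quad_char (x::'a) * quad_char x = 1"
  by (simp add: quad_char_issq)

lemma quad_ne_eps: "quad_char \<noteq> (\<epsilon> :: 'a \<Rightarrow> complex)"
proof
  assume "quad_char = (\<epsilon> :: 'a \<Rightarrow> complex)"
  then have "(\<Sum>y\<in>UNIV. quad_char (y::'a)) = of_nat (CARD('a) - 1)"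
    using char_sum[OF eps_mchars] by simp
  then show False using quad_sum card_ge2[where 'a='a] by simp
qed

lemma quad_quad: "cmul quad_char quad_char = (\<epsilon> :: 'a \<Rightarrow> complex)"
  by (rule ext) (simp add: cmul_def quad_char_issq triv_char_def)

lemma eps_or_quad:
  assumes c: "\<chi> \<in> mchars" and sq: "cmul \<chi> \<chi> = (\<epsilon> :: 'a \<Rightarrow> complex)"
  shows "\<chi> = \<epsilon> \<or> \<chi> = quad_char"
proof (cases "\<chi> = \<epsilon>")
  case True then show ?thesis by simp
next
  case False note ne = this
  have pm: "\<chi> x = 1 \<or> \<chi> x = -1" if "x \<noteq> 0" for x
  proof -
    have "\<chi> x * \<chi> x = 1" using fun_cong[OF sq, of x] that by (simp add: cmul_def triv_char_def)
    then have "(\<chi> x - 1) * (\<chi> x + 1) = 0" by (simp add: algebra_simps)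
    then show ?thesis by (auto simp: eq_neg_iff_add_eq_0)
  qed
  have onsq: "\<chi> x = 1" if sx: "issq x" "x \<noteq> 0" for x
  proof -
    obtain w where "w ^ 2 = x" using sx(1) unfolding issq_def by blast
    then have "\<chi> x = \<chi> w * \<chi> w" by (auto simp: power2_eq_square mc_mult[OF c])
    then show ?thesis using fun_cong[OF sq, of w] \<open>w ^ 2 = x\<close> sx by (auto simp: cmul_def triv_char_def)
  qed
  from ne obtain a where "\<chi> a \<noteq> \<epsilon> a" by auto
  then have a0: "a \<noteq> 0" and a1: "\<chi> a = -1" using mc_0[OF c] pm by (auto simp: triv_char_def split: if_splits)
  have ansq: "\<not> issq a" using onsq a0 a1 by force
  have "\<chi> = quad_char"
  proof
    fix x :: 'a
    show "\<chi> x = quad_char x"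
    proof (cases "x = 0")
      case True then show ?thesis by (simp add: mc_0[OF c] quad_char_def)
    next
      case False
      show ?thesis
      proof (cases "issq x")
        case True then show ?thesis using onsq False by (simp add: quad_char_issq)
      next
        case nsq: False
        have "issq (a * x)" by (rule nsq_mult[OF ansq nsq])
        then have "\<chi> (a * x) = 1" using onsq a0 False by simp
        then have "- \<chi> x = 1" using a1 by (simp add: mc_mult[OF c])
        then have "\<chi> x = -1" by (metis minus_minus)
        then show ?thesis using False nsq by (simp add: quad_char_issq)
      qed
    qed
  qed
  then show ?thesis by simp
qed

end



context addc begin

lemma jac_sq:
  fixes \<chi> :: "'a \<Rightarrow> complex"
  assumes two: "(2::'a) \<noteq> 0" and c: "\<chi> \<in> mchars" and ne: "\<chi> \<noteq> \<epsilon>"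
  shows "jac \<chi> \<chi> = inverse (\<chi> 4) * jac \<chi> quad_char"
proof -
  have four: "(4::'a) \<noteq> 0" using two by (metis mult_eq_0_iff num_double numeral_times_numeral)
  have "jac \<chi> \<chi> = (\<Sum>x\<in>UNIV. \<chi> (x * (1 - x)))" by (simp add: jac_def mc_mult[OF c])
  also have "\<dots> = (\<Sum>x\<in>UNIV. (\<lambda>z. \<chi> ((1 - z ^ 2) / 4)) (2 * x - 1))"
  proof (rule sum.cong[OF refl])
    fix x :: 'a
    have e: "x * (1 - x) = (1 - (2 * x - 1) ^ 2) / 4" using four
      by (simp add: field_simps power2_eq_square)
    show "\<chi> (x * (1 - x)) = (\<lambda>z. \<chi> ((1 - z ^ 2) / 4)) (2 * x - 1)" unfolding e by simp
  qed
  also have "\<dots> = (\<Sum>z\<in>UNIV. \<chi> ((1 - z ^ 2) / 4))"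
  proof (rule sum.reindex_bij_betw)
    show "bij_betw (\<lambda>x. 2 * x - 1) UNIV (UNIV::'a set)"
      using two by (intro bij_betwI[where g="\<lambda>z. (z + 1) / 2"]) (auto simp: field_simps)
  qed
  also have "\<dots> = (\<Sum>y\<in>UNIV. \<chi> ((1 - y) / 4) * (1 + quad_char y))"
    by (rule sum_sq[OF two])
  also have "\<dots> = (\<Sum>y\<in>UNIV. \<chi> ((1 - y) / 4)) + (\<Sum>y\<in>UNIV. \<chi> ((1 - y) / 4) * quad_char y)"
    by (simp add: distrib_left sum.distrib)
  also have "(\<Sum>y\<in>UNIV. \<chi> ((1 - y) / 4)) = (\<Sum>w\<in>UNIV. \<chi> w)"
  proof (rule sum.reindex_bij_betw)
    show "bij_betw (\<lambda>y. (1 - y) / 4) UNIV (UNIV::'a set)"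
      using four by (intro bij_betwI[where g="\<lambda>w. 1 - 4 * w"]) (auto simp: field_simps)
  qed
  also have "\<dots> = 0" using char_sum[OF c] ne by simp
  also have "(\<Sum>y\<in>UNIV. \<chi> ((1 - y) / 4) * quad_char y) = inverse (\<chi> 4) * (\<Sum>y\<in>UNIV. \<chi> (1 - y) * quad_char y)"
  proof -
    have e: "\<And>y. \<chi> ((1 - y) / 4) = \<chi> (1 - y) * inverse (\<chi> 4)" by (simp only: mc_divide[OF c]) (simp only: divide_inverse)
    show ?thesis unfolding sum_distrib_left e by (intro sum.cong refl) (simp only: mult_ac)
  qed
  also have "(\<Sum>y\<in>UNIV. \<chi> (1 - y) * quad_char y) = (\<Sum>x\<in>UNIV. (\<lambda>y. \<chi> (1 - y) * quad_char y) (1 - x))"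
    by (rule sum.reindex_bij_betw[symmetric]) (intro bij_betwI[where g="\<lambda>x. 1 - x"], auto)
  also have "\<dots> = jac \<chi> quad_char" by (simp add: jac_def)
  finally show ?thesis by simp
qed

lemma HD:
  assumes two: "(2::'a) \<noteq> 0" and c: "\<chi> \<in> mchars"
  shows "gauss \<psi> \<chi> * gauss \<psi> (cmul \<chi> quad_char) = inverse (\<chi> 4) * gauss \<psi> (cmul \<chi> \<chi>) * gauss \<psi> quad_char"
proof -
  have four: "(4::'a) = 2 ^ 2" by simp
  have four0: "(4::'a) \<noteq> 0" using two by (metis mult_eq_0_iff num_double numeral_times_numeral)
  have Q: "(quad_char :: 'a \<Rightarrow> complex) \<in> mchars" by (rule quad_mchars[OF two])
  show ?thesis
  proof (cases "cmul \<chi> \<chi> = \<epsilon>")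
    case True
    then consider "\<chi> = \<epsilon>" | "\<chi> = quad_char" using eps_or_quad[OF two c] by blast
    then show ?thesis
    proof cases
      case 1
      then show ?thesis using four0 by (simp add: eps_cmul[OF Q] gauss_eps cmul_eps[OF eps_mchars] triv_char_def)
    next
      case 2
      have "quad_char (4::'a) = 1" using four0 by (simp add: quad_char_def) (metis power2_eq_square four)
      then show ?thesis using 2 True by (simp add: gauss_eps)
    qed
  next
    case False
    have cne: "\<chi> \<noteq> \<epsilon>" using False eps_cmul[OF eps_mchars] by auto
    have cq: "cmul \<chi> quad_char \<noteq> \<epsilon>"
    proof
      assume h: "cmul \<chi> quad_char = \<epsilon>"
      have "\<chi> = quad_char"
      proof
        fix x :: 'a
        show "\<chi> x = quad_char x"
        proof (cases "x = 0")
          case True then show ?thesis by (simp add: mc_0[OF c] quad_char_def)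
        next
          case False
          have "\<chi> x * quad_char x = 1" using fun_cong[OF h, of x] False by (simp add: cmul_def triv_char_def)
          then have "\<chi> x * quad_char x * quad_char x = quad_char x" by simp
          then show ?thesis using quad_sq[OF two False] by (simp add: mult.assoc)
        qed
      qed
      then show False using False quad_quad[OF two] by simp
    qed
    have a: "gauss \<psi> \<chi> * gauss \<psi> \<chi> = - jac \<chi> \<chi> * gauss \<psi> (cmul \<chi> \<chi>)"
      by (rule gauss_jac[OF c c False])
    have b: "gauss \<psi> \<chi> * gauss \<psi> quad_char = - jac \<chi> quad_char * gauss \<psi> (cmul \<chi> quad_char)"
      by (rule gauss_jac[OF c Q cq])
    have J: "jac \<chi> \<chi> = inverse (\<chi> 4) * jac \<chi> quad_char" by (rule jac_sq[OF two c cne])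
    have Jnz: "jac \<chi> quad_char \<noteq> 0" using b gauss_nz[OF c] gauss_nz[OF Q] by auto
    have "- jac \<chi> quad_char * (gauss \<psi> \<chi> * gauss \<psi> (cmul \<chi> quad_char))
        = gauss \<psi> \<chi> * (gauss \<psi> \<chi> * gauss \<psi> quad_char)" using b by (simp add: mult_ac)
    also have "\<dots> = (gauss \<psi> \<chi> * gauss \<psi> \<chi>) * gauss \<psi> quad_char" by (simp add: mult_ac)
    also have "\<dots> = - jac \<chi> quad_char * (inverse (\<chi> 4) * gauss \<psi> (cmul \<chi> \<chi>) * gauss \<psi> quad_char)"
      using a J by (simp add: mult_ac)
    finally show ?thesis using Jnz by simp
  qed
qed

end



definition hK :: "('a::{field,finite} \<Rightarrow> complex) \<Rightarrow> ('a \<Rightarrow> complex) list \<Rightarrow> ('a \<Rightarrow> complex) list \<Rightarrow> ('a \<Rightarrow> complex) \<Rightarrow> complex" where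
  "hK \<psi> as bs \<nu> = (\<Prod>a\<leftarrow>as. poch \<psi> a \<nu>) / (poch0 \<psi> \<epsilon> \<nu> * (\<Prod>b\<leftarrow>bs. poch0 \<psi> b \<nu>))"

lemma prod_hyp:
  fixes \<psi> :: "'a::{field,finite} \<Rightarrow> complex" and As Bs :: "nat \<Rightarrow> ('a \<Rightarrow> complex) list" and L :: "nat \<Rightarrow> 'a"
  shows "(\<Prod>i\<in>{1..n}. hyp \<psi> (As i) (Bs i) (L i)) = (1 / (1 - of_nat CARD('a)))^n *
     (\<Sum>\<nu>\<in>PiE {1..n} (\<lambda>_. mchars). \<Prod>i\<in>{1..n}. hK \<psi> (As i) (Bs i) (\<nu> i) * \<nu> i (L i))"
proof -
  have "(\<Prod>i\<in>{1..n}. hyp \<psi> (As i) (Bs i) (L i)) = (\<Prod>i\<in>{1..n}. (1 / (1 - of_nat CARD('a))) * (\<Sum>\<mu>\<in>mchars. hK \<psi> (As i) (Bs i) \<mu> * \<mu> (L i)))"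
    by (simp add: hyp_def hK_def)
  also have "\<dots> = (1 / (1 - of_nat CARD('a)))^n * (\<Prod>i\<in>{1..n}. (\<Sum>\<mu>\<in>mchars. hK \<psi> (As i) (Bs i) \<mu> * \<mu> (L i)))"
    by (simp only: prod.distrib prod_constant card_atLeastAtMost) simp
  also have "\<dots> = (1 / (1 - of_nat CARD('a)))^n * (\<Sum>\<nu>\<in>PiE {1..n} (\<lambda>_. mchars). \<Prod>i\<in>{1..n}. hK \<psi> (As i) (Bs i) (\<nu> i) * \<nu> i (L i))"
    by (subst prod_sum_PiE) (auto simp: finite_mchars)
  finally show ?thesis .
qed




lemma prod_fgh: "(\<Prod>i\<in>A. (f i / g i) * h i) = (\<Prod>i\<in>A. f i) / (\<Prod>i\<in>A. g i) * (\<Prod>i\<in>A. h i :: complex)"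
  by (simp add: prod.distrib prod_dividef)

context addc begin

lemma partA:
  assumes n: "n \<ge> 1" and a: "\<alpha> \<in> mchars"
  shows "- gauss \<psi> \<alpha> * lauricella_A \<psi> n \<alpha> \<beta>s \<gamma>s lam
      = (\<Sum>t\<in>UNIV - {0}. \<psi> t * \<alpha> t * (\<Prod>i\<in>{1..n}. hyp \<psi> [\<beta>s i] [\<gamma>s i] (lam i * t)))"
proof -
  let ?P = "PiE {1..n} (\<lambda>_. mchars) :: (nat \<Rightarrow> 'a \<Rightarrow> complex) set"
  let ?c = "1 / (1 - of_nat CARD('a)) :: complex"
  define C where "C \<nu> = (\<Prod>i\<in>{1..n}. hK \<psi> [\<beta>s i] [\<gamma>s i] (\<nu> i) * \<nu> i (lam i))" for \<nu> :: "nat \<Rightarrow> 'a \<Rightarrow> complex"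
  have nu_in: "\<And>\<nu> i. \<nu> \<in> ?P \<Longrightarrow> i \<in> {1..n} \<Longrightarrow> \<nu> i \<in> mchars" by auto
  have "(\<Sum>t\<in>UNIV - {0}. \<psi> t * \<alpha> t * (\<Prod>i\<in>{1..n}. hyp \<psi> [\<beta>s i] [\<gamma>s i] (lam i * t)))
      = (\<Sum>t\<in>UNIV - {0}. \<psi> t * \<alpha> t * (?c ^ n * (\<Sum>\<nu>\<in>?P. C \<nu> * cprod n \<nu> t)))"
  proof (rule sum.cong[OF refl])
    fix t :: 'a
    have inner: "(\<Prod>i\<in>{1..n}. hK \<psi> [\<beta>s i] [\<gamma>s i] (\<nu> i) * \<nu> i (lam i * t)) = C \<nu> * cprod n \<nu> t"
      if nu: "\<nu> \<in> ?P" for \<nu>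
    proof -
      have "(\<Prod>i\<in>{1..n}. hK \<psi> [\<beta>s i] [\<gamma>s i] (\<nu> i) * \<nu> i (lam i * t))
          = (\<Prod>i\<in>{1..n}. (hK \<psi> [\<beta>s i] [\<gamma>s i] (\<nu> i) * \<nu> i (lam i)) * \<nu> i t)"
      proof (rule prod.cong[OF refl])
        fix i assume i: "i \<in> {1..n}"
        show "hK \<psi> [\<beta>s i] [\<gamma>s i] (\<nu> i) * \<nu> i (lam i * t) = (hK \<psi> [\<beta>s i] [\<gamma>s i] (\<nu> i) * \<nu> i (lam i)) * \<nu> i t"
          by (simp only: mc_mult[OF nu_in[OF nu i]] mult.assoc)
      qed
      then show ?thesis by (simp only: prod.distrib C_def cprod_def)
    qed
    have "(\<Prod>i\<in>{1..n}. hyp \<psi> [\<beta>s i] [\<gamma>s i] (lam i * t)) = ?c ^ n * (\<Sum>\<nu>\<in>?P. \<Prod>i\<in>{1..n}. hK \<psi> [\<beta>s i] [\<gamma>s i] (\<nu> i) * \<nu> i (lam i * t))"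
      by (rule prod_hyp)
    also have "\<dots> = ?c ^ n * (\<Sum>\<nu>\<in>?P. C \<nu> * cprod n \<nu> t)"
      using inner by (intro arg_cong[where f="\<lambda>x. ?c ^ n * x"] sum.cong refl) auto
    finally show "\<psi> t * \<alpha> t * (\<Prod>i\<in>{1..n}. hyp \<psi> [\<beta>s i] [\<gamma>s i] (lam i * t)) = \<psi> t * \<alpha> t * (?c ^ n * (\<Sum>\<nu>\<in>?P. C \<nu> * cprod n \<nu> t))"
      by simp
  qed
  also have "\<dots> = ?c ^ n * (\<Sum>\<nu>\<in>?P. C \<nu> * (\<Sum>t\<in>UNIV - {0}. \<psi> t * cmul \<alpha> (cprod n \<nu>) t))"
    by (simp add: sum_distrib_left sum_distrib_right cmul_def mult_ac sum.swap[of _ "UNIV - {0}"])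
  also have "\<dots> = ?c ^ n * (\<Sum>\<nu>\<in>?P. - gauss \<psi> (cmul \<alpha> (cprod n \<nu>)) * C \<nu>)"
    by (simp add: gauss_def mult.commute)
  also have "\<dots> = - gauss \<psi> \<alpha> * lauricella_A \<psi> n \<alpha> \<beta>s \<gamma>s lam"
  proof -
    have "\<And>\<nu>. \<nu> \<in> ?P \<Longrightarrow> - gauss \<psi> (cmul \<alpha> (cprod n \<nu>)) * C \<nu>
        = - gauss \<psi> \<alpha> * (poch \<psi> \<alpha> (cprod n \<nu>) * (\<Prod>i\<in>{1..n}. poch \<psi> (\<beta>s i) (\<nu> i)) /
        (\<Prod>i\<in>{1..n}. poch0 \<psi> (\<gamma>s i) (\<nu> i)) * lauP \<psi> n \<nu> lam)"
    proof -
      fix \<nu> assume nu: "\<nu> \<in> ?P"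
      have Cn: "C \<nu> = (\<Prod>i\<in>{1..n}. poch \<psi> (\<beta>s i) (\<nu> i)) / (\<Prod>i\<in>{1..n}. poch0 \<psi> (\<gamma>s i) (\<nu> i)) * lauP \<psi> n \<nu> lam"
      proof -
        have "C \<nu> = (\<Prod>i\<in>{1..n}. (poch \<psi> (\<beta>s i) (\<nu> i) / poch0 \<psi> (\<gamma>s i) (\<nu> i)) * (\<nu> i (lam i) / poch0 \<psi> \<epsilon> (\<nu> i)))"
          unfolding C_def hK_def by (intro prod.cong refl) (simp add: divide_inverse mult_ac)
        then show ?thesis by (simp only: prod_fgh lauP_def)
      qed
      have "gauss \<psi> \<alpha> * poch \<psi> \<alpha> (cprod n \<nu>) = gauss \<psi> (cmul \<alpha> (cprod n \<nu>))"
        using gauss_nz[OF a] by (simp add: poch_def)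
      then show "?thesis \<nu>" unfolding Cn by (simp add: mult_ac times_divide_eq_right[symmetric] del: times_divide_eq_right)
    qed
    then show ?thesis
      by (simp add: lauricella_A_def sum_distrib_left power_one_over cong: sum.cong)
  qed
  finally show ?thesis by simp
qed

end



context addc begin

lemma HD_ratio:
  assumes two: "(2::'a) \<noteq> 0" and a: "\<alpha> \<in> mchars" and m: "\<mu> \<in> mchars"
  shows "gauss \<psi> (cmul \<alpha> \<alpha>) * (poch \<psi> \<alpha> \<mu> * poch \<psi> (cmul \<alpha> quad_char) \<mu>)
       = inverse (\<mu> 4) * gauss \<psi> (cmul (cmul \<alpha> \<mu>) (cmul \<alpha> \<mu>))"
proof -
  have Q: "(quad_char :: 'a \<Rightarrow> complex) \<in> mchars" by (rule quad_mchars[OF two])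
  have am: "cmul \<alpha> \<mu> \<in> mchars" by (rule cmul_mchars[OF a m])
  have four0: "(4::'a) \<noteq> 0" using two by (metis mult_eq_0_iff num_double numeral_times_numeral)
  have e: "cmul (cmul \<alpha> quad_char) \<mu> = cmul (cmul \<alpha> \<mu>) quad_char" by (rule ext) (simp add: cmul_def mult_ac)
  have H1: "gauss \<psi> \<alpha> * gauss \<psi> (cmul \<alpha> quad_char) = inverse (\<alpha> 4) * gauss \<psi> (cmul \<alpha> \<alpha>) * gauss \<psi> quad_char"
    by (rule HD[OF two a])
  have H2: "gauss \<psi> (cmul \<alpha> \<mu>) * gauss \<psi> (cmul (cmul \<alpha> \<mu>) quad_char) = inverse (\<alpha> 4 * \<mu> 4) * gauss \<psi> (cmul (cmul \<alpha> \<mu>) (cmul \<alpha> \<mu>)) * gauss \<psi> quad_char"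
    using HD[OF two am] by (simp add: cmul_def)
  have nz: "gauss \<psi> (cmul \<alpha> \<alpha>) \<noteq> 0" "gauss \<psi> quad_char \<noteq> 0" "\<alpha> 4 \<noteq> 0"
    using gauss_nz[OF cmul_mchars[OF a a]] gauss_nz[OF Q] mc_nz[OF a four0] by auto
  have nz2: "gauss \<psi> \<alpha> * gauss \<psi> (cmul \<alpha> quad_char) \<noteq> 0" using H1 nz by simp
  have "poch \<psi> \<alpha> \<mu> * poch \<psi> (cmul \<alpha> quad_char) \<mu>
      = (gauss \<psi> (cmul \<alpha> \<mu>) * gauss \<psi> (cmul (cmul \<alpha> \<mu>) quad_char)) / (gauss \<psi> \<alpha> * gauss \<psi> (cmul \<alpha> quad_char))"
    by (simp add: poch_def e)
  also have "\<dots> = inverse (\<alpha> 4 * \<mu> 4) * gauss \<psi> (cmul (cmul \<alpha> \<mu>) (cmul \<alpha> \<mu>)) * gauss \<psi> quad_char /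
      (inverse (\<alpha> 4) * gauss \<psi> (cmul \<alpha> \<alpha>) * gauss \<psi> quad_char)" by (simp only: H1 H2)
  finally show ?thesis using nz by (simp add: field_simps)
qed

lemma partD:
  assumes n: "n \<ge> 1" and a: "\<alpha> \<in> mchars" and b: "\<beta> \<in> mchars"
  shows "gauss \<psi> \<alpha> * gauss \<psi> \<beta> * lauricella_C \<psi> n \<alpha> \<beta> \<gamma>s lam
      = (\<Sum>s\<in>UNIV - {0}. \<Sum>t\<in>UNIV - {0}. \<psi> (s + t) * \<alpha> s * \<beta> t *
           (\<Prod>i\<in>{1..n}. hyp \<psi> [] [\<gamma>s i] (lam i * s * t)))"
proof -
  let ?P = "PiE {1..n} (\<lambda>_. mchars) :: (nat \<Rightarrow> 'a \<Rightarrow> complex) set"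
  let ?c = "1 / (1 - of_nat CARD('a)) :: complex"
  let ?U = "UNIV - {0::'a}"
  define C where "C \<nu> = (\<Prod>i\<in>{1..n}. hK \<psi> [] [\<gamma>s i] (\<nu> i) * \<nu> i (lam i))" for \<nu> :: "nat \<Rightarrow> 'a \<Rightarrow> complex"
  define X where "X \<nu> s = \<psi> s * cmul \<alpha> (cprod n \<nu>) s" for \<nu> :: "nat \<Rightarrow> 'a \<Rightarrow> complex" and s
  define Y where "Y \<nu> s = \<psi> s * cmul \<beta> (cprod n \<nu>) s" for \<nu> :: "nat \<Rightarrow> 'a \<Rightarrow> complex" and s
  have nu_in: "\<And>\<nu> i. \<nu> \<in> ?P \<Longrightarrow> i \<in> {1..n} \<Longrightarrow> \<nu> i \<in> mchars" by auto
  have "(\<Sum>s\<in>?U. \<Sum>t\<in>?U. \<psi> (s + t) * \<alpha> s * \<beta> t * (\<Prod>i\<in>{1..n}. hyp \<psi> [] [\<gamma>s i] (lam i * s * t)))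
      = (\<Sum>s\<in>?U. \<Sum>t\<in>?U. ?c ^ n * (\<Sum>\<nu>\<in>?P. C \<nu> * (X \<nu> s * Y \<nu> t)))"
  proof (intro sum.cong refl)
    fix s t :: 'a
    have inner: "(\<Prod>i\<in>{1..n}. hK \<psi> [] [\<gamma>s i] (\<nu> i) * \<nu> i (lam i * s * t)) = C \<nu> * cprod n \<nu> s * cprod n \<nu> t"
      if nu: "\<nu> \<in> ?P" for \<nu>
    proof -
      have "(\<Prod>i\<in>{1..n}. hK \<psi> [] [\<gamma>s i] (\<nu> i) * \<nu> i (lam i * s * t))
          = (\<Prod>i\<in>{1..n}. (hK \<psi> [] [\<gamma>s i] (\<nu> i) * \<nu> i (lam i)) * \<nu> i s * \<nu> i t)"
      proof (rule prod.cong[OF refl])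
        fix i assume i: "i \<in> {1..n}"
        show "hK \<psi> [] [\<gamma>s i] (\<nu> i) * \<nu> i (lam i * s * t) = (hK \<psi> [] [\<gamma>s i] (\<nu> i) * \<nu> i (lam i)) * \<nu> i s * \<nu> i t"
          by (simp only: mc_mult[OF nu_in[OF nu i]] mult.assoc)
      qed
      then show ?thesis by (simp only: prod.distrib C_def cprod_def)
    qed
    have "(\<Prod>i\<in>{1..n}. hyp \<psi> [] [\<gamma>s i] (lam i * s * t)) = ?c ^ n * (\<Sum>\<nu>\<in>?P. \<Prod>i\<in>{1..n}. hK \<psi> [] [\<gamma>s i] (\<nu> i) * \<nu> i (lam i * s * t))"
      by (rule prod_hyp)
    also have "\<dots> = ?c ^ n * (\<Sum>\<nu>\<in>?P. C \<nu> * cprod n \<nu> s * cprod n \<nu> t)"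
      using inner by (intro arg_cong[where f="\<lambda>x. ?c ^ n * x"] sum.cong refl) auto
    finally show "\<psi> (s + t) * \<alpha> s * \<beta> t * (\<Prod>i\<in>{1..n}. hyp \<psi> [] [\<gamma>s i] (lam i * s * t)) = ?c ^ n * (\<Sum>\<nu>\<in>?P. C \<nu> * (X \<nu> s * Y \<nu> t))"
      by (simp add: X_def Y_def cmul_def psi_add sum_distrib_left mult_ac)
  qed
  also have "\<dots> = ?c ^ n * (\<Sum>s\<in>?U. \<Sum>t\<in>?U. \<Sum>\<nu>\<in>?P. C \<nu> * (X \<nu> s * Y \<nu> t))"
    by (simp add: sum_distrib_left)
  also have "\<dots> = ?c ^ n * (\<Sum>s\<in>?U. \<Sum>\<nu>\<in>?P. \<Sum>t\<in>?U. C \<nu> * (X \<nu> s * Y \<nu> t))"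
    by (intro arg_cong[where f="\<lambda>x. ?c ^ n * x"] sum.cong refl) (rule sum.swap)
  also have "\<dots> = ?c ^ n * (\<Sum>\<nu>\<in>?P. \<Sum>s\<in>?U. \<Sum>t\<in>?U. C \<nu> * (X \<nu> s * Y \<nu> t))"
    by (intro arg_cong[where f="\<lambda>x. ?c ^ n * x"]) (rule sum.swap)
  also have "\<dots> = ?c ^ n * (\<Sum>\<nu>\<in>?P. gauss \<psi> (cmul \<alpha> (cprod n \<nu>)) * gauss \<psi> (cmul \<beta> (cprod n \<nu>)) * C \<nu>)"
  proof (intro arg_cong[where f="\<lambda>x. ?c ^ n * x"] sum.cong refl)
    fix \<nu>
    have "(\<Sum>s\<in>?U. \<Sum>t\<in>?U. C \<nu> * (X \<nu> s * Y \<nu> t)) = C \<nu> * ((\<Sum>s\<in>?U. X \<nu> s) * (\<Sum>t\<in>?U. Y \<nu> t))"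
      unfolding sum_product by (simp only: sum_distrib_left)
    also have "\<dots> = gauss \<psi> (cmul \<alpha> (cprod n \<nu>)) * gauss \<psi> (cmul \<beta> (cprod n \<nu>)) * C \<nu>"
      by (simp add: X_def Y_def gauss_def)
    finally show "(\<Sum>s\<in>?U. \<Sum>t\<in>?U. C \<nu> * (X \<nu> s * Y \<nu> t)) = gauss \<psi> (cmul \<alpha> (cprod n \<nu>)) * gauss \<psi> (cmul \<beta> (cprod n \<nu>)) * C \<nu>" .
  qed
  also have "\<dots> = gauss \<psi> \<alpha> * gauss \<psi> \<beta> * lauricella_C \<psi> n \<alpha> \<beta> \<gamma>s lam"
  proof -
    have "\<And>\<nu>. \<nu> \<in> ?P \<Longrightarrow> gauss \<psi> (cmul \<alpha> (cprod n \<nu>)) * gauss \<psi> (cmul \<beta> (cprod n \<nu>)) * C \<nu>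
        = gauss \<psi> \<alpha> * gauss \<psi> \<beta> * (poch \<psi> \<alpha> (cprod n \<nu>) * poch \<psi> \<beta> (cprod n \<nu>) /
        (\<Prod>i\<in>{1..n}. poch0 \<psi> (\<gamma>s i) (\<nu> i)) * lauP \<psi> n \<nu> lam)"
    proof -
      fix \<nu> assume nu: "\<nu> \<in> ?P"
      have Cn: "C \<nu> = (\<Prod>i\<in>{1..n}. 1) / (\<Prod>i\<in>{1..n}. poch0 \<psi> (\<gamma>s i) (\<nu> i)) * lauP \<psi> n \<nu> lam"
      proof -
        have "C \<nu> = (\<Prod>i\<in>{1..n}. (1 / poch0 \<psi> (\<gamma>s i) (\<nu> i)) * (\<nu> i (lam i) / poch0 \<psi> \<epsilon> (\<nu> i)))"
          unfolding C_def hK_def by (intro prod.cong refl) (simp add: divide_inverse mult_ac)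
        then show ?thesis by (simp only: prod_fgh lauP_def)
      qed
      have ga: "gauss \<psi> \<alpha> * poch \<psi> \<alpha> (cprod n \<nu>) = gauss \<psi> (cmul \<alpha> (cprod n \<nu>))"
        using gauss_nz[OF a] by (simp add: poch_def)
      have gb: "gauss \<psi> \<beta> * poch \<psi> \<beta> (cprod n \<nu>) = gauss \<psi> (cmul \<beta> (cprod n \<nu>))"
        using gauss_nz[OF b] by (simp add: poch_def)
      show "?thesis \<nu>" unfolding Cn ga[symmetric] gb[symmetric] by (simp add: divide_inverse mult_ac)
    qed
    then show ?thesis
      by (simp add: lauricella_C_def sum_distrib_left power_one_over cong: sum.cong)
  qed
  finally show ?thesis by simp
qed

end



context addc begin

lemma partC:
  assumes two: "(2::'a) \<noteq> 0" and n: "n \<ge> 1" and a: "\<alpha> \<in> mchars"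
  shows "- gauss \<psi> (cmul \<alpha> \<alpha>) * lauricella_C \<psi> n \<alpha> (cmul \<alpha> quad_char) \<beta>s lam
      = (\<Sum>t\<in>UNIV - {0}. \<psi> t * cmul \<alpha> \<alpha> t * (\<Prod>i\<in>{1..n}. hyp \<psi> [] [\<beta>s i] (lam i * t ^ 2 / 4)))"
proof -
  let ?P = "PiE {1..n} (\<lambda>_. mchars) :: (nat \<Rightarrow> 'a \<Rightarrow> complex) set"
  let ?c = "1 / (1 - of_nat CARD('a)) :: complex"
  let ?U = "UNIV - {0::'a}"
  define C where "C \<nu> = (\<Prod>i\<in>{1..n}. hK \<psi> [] [\<beta>s i] (\<nu> i) * \<nu> i (lam i))" for \<nu> :: "nat \<Rightarrow> 'a \<Rightarrow> complex"
  define D where "D \<nu> = cprod n \<nu> (inverse 4)" for \<nu> :: "nat \<Rightarrow> 'a \<Rightarrow> complex"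
  define M where "M \<nu> = cmul (cmul \<alpha> (cprod n \<nu>)) (cmul \<alpha> (cprod n \<nu>))" for \<nu> :: "nat \<Rightarrow> 'a \<Rightarrow> complex"
  have nu_in: "\<And>\<nu> i. \<nu> \<in> ?P \<Longrightarrow> i \<in> {1..n} \<Longrightarrow> \<nu> i \<in> mchars" by auto
  have "(\<Sum>t\<in>?U. \<psi> t * cmul \<alpha> \<alpha> t * (\<Prod>i\<in>{1..n}. hyp \<psi> [] [\<beta>s i] (lam i * t ^ 2 / 4)))
      = (\<Sum>t\<in>?U. ?c ^ n * (\<Sum>\<nu>\<in>?P. (C \<nu> * D \<nu>) * (\<psi> t * M \<nu> t)))"
  proof (rule sum.cong[OF refl])
    fix t :: 'a
    have inner: "(\<Prod>i\<in>{1..n}. hK \<psi> [] [\<beta>s i] (\<nu> i) * \<nu> i (lam i * t ^ 2 / 4)) = C \<nu> * (cprod n \<nu> t ^ 2 * D \<nu>)"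
      if nu: "\<nu> \<in> ?P" for \<nu>
    proof -
      have "(\<Prod>i\<in>{1..n}. hK \<psi> [] [\<beta>s i] (\<nu> i) * \<nu> i (lam i * t ^ 2 / 4))
          = (\<Prod>i\<in>{1..n}. (hK \<psi> [] [\<beta>s i] (\<nu> i) * \<nu> i (lam i)) * (\<nu> i t ^ 2 * \<nu> i (inverse 4)))"
      proof (rule prod.cong[OF refl])
        fix i assume i: "i \<in> {1..n}"
        show "hK \<psi> [] [\<beta>s i] (\<nu> i) * \<nu> i (lam i * t ^ 2 / 4) = (hK \<psi> [] [\<beta>s i] (\<nu> i) * \<nu> i (lam i)) * (\<nu> i t ^ 2 * \<nu> i (inverse 4))"
          by (simp only: divide_inverse mc_mult[OF nu_in[OF nu i]] mc_pow[OF nu_in[OF nu i]] mult.assoc)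
      qed
      then show ?thesis by (simp only: prod.distrib prod_power_distrib C_def D_def cprod_def)
    qed
    have "(\<Prod>i\<in>{1..n}. hyp \<psi> [] [\<beta>s i] (lam i * t ^ 2 / 4)) = ?c ^ n * (\<Sum>\<nu>\<in>?P. \<Prod>i\<in>{1..n}. hK \<psi> [] [\<beta>s i] (\<nu> i) * \<nu> i (lam i * t ^ 2 / 4))"
      by (rule prod_hyp)
    also have "\<dots> = ?c ^ n * (\<Sum>\<nu>\<in>?P. C \<nu> * (cprod n \<nu> t ^ 2 * D \<nu>))"
      using inner by (intro arg_cong[where f="\<lambda>x. ?c ^ n * x"] sum.cong refl) auto
    finally show "\<psi> t * cmul \<alpha> \<alpha> t * (\<Prod>i\<in>{1..n}. hyp \<psi> [] [\<beta>s i] (lam i * t ^ 2 / 4)) = ?c ^ n * (\<Sum>\<nu>\<in>?P. (C \<nu> * D \<nu>) * (\<psi> t * M \<nu> t))"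
      by (simp add: M_def cmul_def sum_distrib_left power2_eq_square mult_ac)
  qed
  also have "\<dots> = ?c ^ n * (\<Sum>t\<in>?U. \<Sum>\<nu>\<in>?P. (C \<nu> * D \<nu>) * (\<psi> t * M \<nu> t))"
    by (simp only: sum_distrib_left)
  also have "\<dots> = ?c ^ n * (\<Sum>\<nu>\<in>?P. \<Sum>t\<in>?U. (C \<nu> * D \<nu>) * (\<psi> t * M \<nu> t))"
    by (intro arg_cong[where f="\<lambda>x. ?c ^ n * x"]) (rule sum.swap)
  also have "\<dots> = ?c ^ n * (\<Sum>\<nu>\<in>?P. - gauss \<psi> (M \<nu>) * D \<nu> * C \<nu>)"
  proof (intro arg_cong[where f="\<lambda>x. ?c ^ n * x"] sum.cong refl)
    fix \<nu>
    show "(\<Sum>t\<in>?U. (C \<nu> * D \<nu>) * (\<psi> t * M \<nu> t)) = - gauss \<psi> (M \<nu>) * D \<nu> * C \<nu>"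
      unfolding sum_distrib_left[symmetric] by (simp add: gauss_def)
  qed
  also have "\<dots> = - gauss \<psi> (cmul \<alpha> \<alpha>) * lauricella_C \<psi> n \<alpha> (cmul \<alpha> quad_char) \<beta>s lam"
  proof -
    have "\<And>\<nu>. \<nu> \<in> ?P \<Longrightarrow> - gauss \<psi> (M \<nu>) * D \<nu> * C \<nu>
        = - gauss \<psi> (cmul \<alpha> \<alpha>) * (poch \<psi> \<alpha> (cprod n \<nu>) * poch \<psi> (cmul \<alpha> quad_char) (cprod n \<nu>) /
        (\<Prod>i\<in>{1..n}. poch0 \<psi> (\<beta>s i) (\<nu> i)) * lauP \<psi> n \<nu> lam)"
    proof -
      fix \<nu> assume nu: "\<nu> \<in> ?P"
      have cp: "cprod n \<nu> \<in> mchars" by (rule cprod_mchars[OF n nu])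
      have Cn: "C \<nu> = (\<Prod>i\<in>{1..n}. 1) / (\<Prod>i\<in>{1..n}. poch0 \<psi> (\<beta>s i) (\<nu> i)) * lauP \<psi> n \<nu> lam"
      proof -
        have "C \<nu> = (\<Prod>i\<in>{1..n}. (1 / poch0 \<psi> (\<beta>s i) (\<nu> i)) * (\<nu> i (lam i) / poch0 \<psi> \<epsilon> (\<nu> i)))"
          unfolding C_def hK_def by (intro prod.cong refl) (simp add: divide_inverse mult_ac)
        then show ?thesis by (simp only: prod_fgh lauP_def)
      qed
      have H: "gauss \<psi> (cmul \<alpha> \<alpha>) * (poch \<psi> \<alpha> (cprod n \<nu>) * poch \<psi> (cmul \<alpha> quad_char) (cprod n \<nu>))
          = D \<nu> * gauss \<psi> (M \<nu>)"
      proof -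
        have "D \<nu> = inverse (cprod n \<nu> 4)" unfolding D_def by (rule mc_inverse[OF cp])
        then show ?thesis using HD_ratio[OF two a cp] by (simp add: M_def)
      qed
      show "?thesis \<nu>" unfolding Cn
        by (simp add: divide_inverse mult_ac) (metis H mult.commute mult.left_commute)
    qed
    then show ?thesis
      by (simp add: lauricella_C_def sum_distrib_left power_one_over cong: sum.cong)
  qed
  finally show ?thesis by simp
qed

lemma neg_twist:
  assumes e: "\<eta> \<in> mchars"
  shows "(\<Sum>t\<in>UNIV - {0}. \<psi> (- t) * cconj \<eta> t) = - (of_nat CARD('a) / gauss0 \<psi> \<eta>)"
proof -
  have ce: "cconj \<eta> \<in> mchars" by (rule cconj_mchars[OF e])
  have "(\<Sum>t\<in>UNIV - {0}. \<psi> (- t) * cconj \<eta> t) = (\<Sum>t\<in>UNIV. \<psi> ((-1) * t) * cconj \<eta> t)"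
    by (subst sum_drop0) (simp_all add: mc_0[OF ce])
  also have "\<dots> = - inverse (cconj \<eta> (-1)) * gauss \<psi> (cconj \<eta>)"
    by (rule twist[OF ce]) simp
  also have "\<dots> = - \<eta> (-1) * gauss \<psi> (cconj \<eta>)" by (simp add: cconj_def)
  also have "\<dots> = - (of_nat CARD('a) / gauss0 \<psi> \<eta>)"
  proof -
    have P: "gauss0 \<psi> \<eta> * gauss \<psi> (cconj \<eta>) = \<eta> (-1) * of_nat CARD('a)" by (rule gauss0_pair[OF e])
    have nz: "gauss0 \<psi> \<eta> \<noteq> 0" by (rule gauss0_nz[OF e])
    have "\<eta> (-1) * gauss \<psi> (cconj \<eta>) = \<eta> (-1) * (\<eta> (-1) * of_nat CARD('a)) / gauss0 \<psi> \<eta>"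
      using P nz by (simp add: field_simps)
    also have "\<dots> = of_nat CARD('a) / gauss0 \<psi> \<eta>" using mc_neg1[OF e] by (simp add: mult.assoc[symmetric])
    finally show ?thesis by simp
  qed
  finally show ?thesis .
qed

lemma partB:
  assumes n: "n \<ge> 1" and g: "\<gamma> \<in> mchars"
  shows "- (of_nat (card (UNIV :: 'a set)) / gauss0 \<psi> \<gamma>) * lauricella_B \<psi> n \<alpha>s \<beta>s \<gamma> lam
      = (\<Sum>t\<in>UNIV - {0}. \<psi> (- t) * cconj \<gamma> t * (\<Prod>i\<in>{1..n}. hyp \<psi> [\<alpha>s i, \<beta>s i] [] (lam i / t)))"
proof -
  let ?P = "PiE {1..n} (\<lambda>_. mchars) :: (nat \<Rightarrow> 'a \<Rightarrow> complex) set"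
  let ?c = "1 / (1 - of_nat CARD('a)) :: complex"
  let ?U = "UNIV - {0::'a}"
  define C where "C \<nu> = (\<Prod>i\<in>{1..n}. hK \<psi> [\<alpha>s i, \<beta>s i] [] (\<nu> i) * \<nu> i (lam i))" for \<nu> :: "nat \<Rightarrow> 'a \<Rightarrow> complex"
  define E where "E \<nu> = cmul \<gamma> (cprod n \<nu>)" for \<nu> :: "nat \<Rightarrow> 'a \<Rightarrow> complex"
  have nu_in: "\<And>\<nu> i. \<nu> \<in> ?P \<Longrightarrow> i \<in> {1..n} \<Longrightarrow> \<nu> i \<in> mchars" by auto
  have "(\<Sum>t\<in>?U. \<psi> (- t) * cconj \<gamma> t * (\<Prod>i\<in>{1..n}. hyp \<psi> [\<alpha>s i, \<beta>s i] [] (lam i / t)))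
      = (\<Sum>t\<in>?U. ?c ^ n * (\<Sum>\<nu>\<in>?P. C \<nu> * (\<psi> (- t) * cconj (E \<nu>) t)))"
  proof (rule sum.cong[OF refl])
    fix t :: 'a
    have inner: "(\<Prod>i\<in>{1..n}. hK \<psi> [\<alpha>s i, \<beta>s i] [] (\<nu> i) * \<nu> i (lam i / t)) = C \<nu> * cconj (cprod n \<nu>) t"
      if nu: "\<nu> \<in> ?P" for \<nu>
    proof -
      have "(\<Prod>i\<in>{1..n}. hK \<psi> [\<alpha>s i, \<beta>s i] [] (\<nu> i) * \<nu> i (lam i / t))
          = (\<Prod>i\<in>{1..n}. (hK \<psi> [\<alpha>s i, \<beta>s i] [] (\<nu> i) * \<nu> i (lam i)) * inverse (\<nu> i t))"
      proof (rule prod.cong[OF refl])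
        fix i assume i: "i \<in> {1..n}"
        show "hK \<psi> [\<alpha>s i, \<beta>s i] [] (\<nu> i) * \<nu> i (lam i / t) = (hK \<psi> [\<alpha>s i, \<beta>s i] [] (\<nu> i) * \<nu> i (lam i)) * inverse (\<nu> i t)"
          by (simp only: divide_inverse mc_mult[OF nu_in[OF nu i]] mc_inverse[OF nu_in[OF nu i]] mult.assoc)
      qed
      moreover have "(\<Prod>i\<in>{1..n}. inverse (\<nu> i t)) = inverse (\<Prod>i\<in>{1..n}. \<nu> i t)"
        using prod_inversef[of "\<lambda>i. \<nu> i t" "{1..n}"] by (simp add: comp_def)
      ultimately show ?thesis by (simp only: prod.distrib C_def cprod_def cconj_def)
    qed
    have "(\<Prod>i\<in>{1..n}. hyp \<psi> [\<alpha>s i, \<beta>s i] [] (lam i / t)) = ?c ^ n * (\<Sum>\<nu>\<in>?P. \<Prod>i\<in>{1..n}. hK \<psi> [\<alpha>s i, \<beta>s i] [] (\<nu> i) * \<nu> i (lam i / t))"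
      by (rule prod_hyp)
    also have "\<dots> = ?c ^ n * (\<Sum>\<nu>\<in>?P. C \<nu> * cconj (cprod n \<nu>) t)"
      using inner by (intro arg_cong[where f="\<lambda>x. ?c ^ n * x"] sum.cong refl) auto
    finally show "\<psi> (- t) * cconj \<gamma> t * (\<Prod>i\<in>{1..n}. hyp \<psi> [\<alpha>s i, \<beta>s i] [] (lam i / t)) = ?c ^ n * (\<Sum>\<nu>\<in>?P. C \<nu> * (\<psi> (- t) * cconj (E \<nu>) t))"
      by (simp add: E_def cmul_def cconj_def sum_distrib_left mult_ac)
  qed
  also have "\<dots> = ?c ^ n * (\<Sum>t\<in>?U. \<Sum>\<nu>\<in>?P. C \<nu> * (\<psi> (- t) * cconj (E \<nu>) t))"
    by (simp only: sum_distrib_left)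
  also have "\<dots> = ?c ^ n * (\<Sum>\<nu>\<in>?P. \<Sum>t\<in>?U. C \<nu> * (\<psi> (- t) * cconj (E \<nu>) t))"
    by (intro arg_cong[where f="\<lambda>x. ?c ^ n * x"]) (rule sum.swap)
  also have "\<dots> = ?c ^ n * (\<Sum>\<nu>\<in>?P. - (of_nat CARD('a) / gauss0 \<psi> (E \<nu>)) * C \<nu>)"
  proof (intro arg_cong[where f="\<lambda>x. ?c ^ n * x"] sum.cong refl)
    fix \<nu> assume nu: "\<nu> \<in> ?P"
    have e: "E \<nu> \<in> mchars" unfolding E_def by (rule cmul_mchars[OF g cprod_mchars[OF n nu]])
    show "(\<Sum>t\<in>?U. C \<nu> * (\<psi> (- t) * cconj (E \<nu>) t)) = - (of_nat CARD('a) / gauss0 \<psi> (E \<nu>)) * C \<nu>"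
      unfolding sum_distrib_left[symmetric] neg_twist[OF e] by (simp add: mult.commute)
  qed
  also have "\<dots> = - (of_nat (card (UNIV :: 'a set)) / gauss0 \<psi> \<gamma>) * lauricella_B \<psi> n \<alpha>s \<beta>s \<gamma> lam"
  proof -
    have per: "\<And>\<nu>. \<nu> \<in> ?P \<Longrightarrow> - (of_nat CARD('a) / gauss0 \<psi> (E \<nu>)) * C \<nu>
        = - (of_nat (card (UNIV :: 'a set)) / gauss0 \<psi> \<gamma>) * ((\<Prod>i\<in>{1..n}. poch \<psi> (\<alpha>s i) (\<nu> i) * poch \<psi> (\<beta>s i) (\<nu> i)) /
        poch0 \<psi> \<gamma> (cprod n \<nu>) * lauP \<psi> n \<nu> lam)"
    proof -
      fix \<nu> assume nu: "\<nu> \<in> ?P"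
      have Cn: "C \<nu> = (\<Prod>i\<in>{1..n}. poch \<psi> (\<alpha>s i) (\<nu> i) * poch \<psi> (\<beta>s i) (\<nu> i)) * lauP \<psi> n \<nu> lam"
      proof -
        have "C \<nu> = (\<Prod>i\<in>{1..n}. (poch \<psi> (\<alpha>s i) (\<nu> i) * poch \<psi> (\<beta>s i) (\<nu> i)) * (\<nu> i (lam i) / poch0 \<psi> \<epsilon> (\<nu> i)))"
          unfolding C_def hK_def by (intro prod.cong refl) (simp add: divide_inverse mult_ac)
        then show ?thesis by (simp only: prod.distrib lauP_def)
      qed
      have nz: "gauss0 \<psi> \<gamma> \<noteq> 0" by (rule gauss0_nz[OF g])
      have p: "poch0 \<psi> \<gamma> (cprod n \<nu>) = gauss0 \<psi> (E \<nu>) / gauss0 \<psi> \<gamma>" by (simp add: poch0_def E_def)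
      show "?thesis \<nu>" unfolding Cn p using nz by (simp add: divide_inverse mult_ac)
    qed
    have S: "(\<Sum>\<nu>\<in>?P. - (of_nat CARD('a) / gauss0 \<psi> (E \<nu>)) * C \<nu>)
       = - (of_nat (card (UNIV :: 'a set)) / gauss0 \<psi> \<gamma>) * (\<Sum>\<nu>\<in>?P. (\<Prod>i\<in>{1..n}. poch \<psi> (\<alpha>s i) (\<nu> i) * poch \<psi> (\<beta>s i) (\<nu> i)) /
        poch0 \<psi> \<gamma> (cprod n \<nu>) * lauP \<psi> n \<nu> lam)"
      unfolding sum_distrib_left by (rule sum.cong[OF refl]) (rule per)
    show ?thesis unfolding lauricella_B_def S power_one_over by (simp only: mult_ac)
  qed
  finally show ?thesis by simp
qed

end

theorem theorem3p1:
  fixes \<psi> :: "'a::{field,finite} \<Rightarrow> complex"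
    and n :: nat
    and \<alpha> \<beta> \<gamma> :: "'a \<Rightarrow> complex"
    and \<alpha>s \<beta>s \<gamma>s :: "nat \<Rightarrow> 'a \<Rightarrow> complex"
  assumes psi: "nontriv_add_char \<psi>"
    and n: "n \<ge> 1"
    and chars: "\<alpha> \<in> mchars" "\<beta> \<in> mchars" "\<gamma> \<in> mchars"
    and charsi: "\<forall>i\<in>{1..n}. \<alpha>s i \<in> mchars \<and> \<beta>s i \<in> mchars \<and> \<gamma>s i \<in> mchars"
  shows
   "(\<forall>lam :: nat \<Rightarrow> 'a.
      - gauss \<psi> \<alpha> * lauricella_A \<psi> n \<alpha> \<beta>s \<gamma>s lam
      = (\<Sum>t\<in>UNIV - {0}. \<psi> t * \<alpha> t *
           (\<Prod>i\<in>{1..n}. hyp \<psi> [\<beta>s i] [\<gamma>s i] (lam i * t))))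
  \<and> (\<forall>lam :: nat \<Rightarrow> 'a.
      - (of_nat (card (UNIV :: 'a set)) / gauss0 \<psi> \<gamma>) * lauricella_B \<psi> n \<alpha>s \<beta>s \<gamma> lam
      = (\<Sum>t\<in>UNIV - {0}. \<psi> (- t) * cconj \<gamma> t *
           (\<Prod>i\<in>{1..n}. hyp \<psi> [\<alpha>s i, \<beta>s i] [] (lam i / t))))
  \<and> (CHAR('a) \<noteq> 2 \<longrightarrow> (\<forall>lam :: nat \<Rightarrow> 'a.
      - gauss \<psi> (cmul \<alpha> \<alpha>) * lauricella_C \<psi> n \<alpha> (cmul \<alpha> quad_char) \<beta>s lam
      = (\<Sum>t\<in>UNIV - {0}. \<psi> t * cmul \<alpha> \<alpha> t *
           (\<Prod>i\<in>{1..n}. hyp \<psi> [] [\<beta>s i] (lam i * t ^ 2 / 4)))))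
  \<and> (\<forall>lam :: nat \<Rightarrow> 'a.
      gauss \<psi> \<alpha> * gauss \<psi> \<beta> * lauricella_C \<psi> n \<alpha> \<beta> \<gamma>s lam
      = (\<Sum>s\<in>UNIV - {0}. \<Sum>t\<in>UNIV - {0}. \<psi> (s + t) * \<alpha> s * \<beta> t *
           (\<Prod>i\<in>{1..n}. hyp \<psi> [] [\<gamma>s i] (lam i * s * t))))"
  proof -
  interpret addc \<psi> by unfold_locales (rule psi)
  show ?thesis
  proof (intro conjI allI impI)
    fix lam :: "nat \<Rightarrow> 'a"
    show "- gauss \<psi> \<alpha> * lauricella_A \<psi> n \<alpha> \<beta>s \<gamma>s lam
      = (\<Sum>t\<in>UNIV - {0}. \<psi> t * \<alpha> t *
           (\<Prod>i\<in>{1..n}. hyp \<psi> [\<beta>s i] [\<gamma>s i] (lam i * t)))"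
      by (rule partA[OF n chars(1)])
  next
    fix lam :: "nat \<Rightarrow> 'a"
    show "- (of_nat (card (UNIV :: 'a set)) / gauss0 \<psi> \<gamma>) * lauricella_B \<psi> n \<alpha>s \<beta>s \<gamma> lam
      = (\<Sum>t\<in>UNIV - {0}. \<psi> (- t) * cconj \<gamma> t *
           (\<Prod>i\<in>{1..n}. hyp \<psi> [\<alpha>s i, \<beta>s i] [] (lam i / t)))"
      by (rule partB[OF n chars(3)])
  next
    fix lam :: "nat \<Rightarrow> 'a"
    assume c2: "CHAR('a) \<noteq> 2"
    show "- gauss \<psi> (cmul \<alpha> \<alpha>) * lauricella_C \<psi> n \<alpha> (cmul \<alpha> quad_char) \<beta>s lam
      = (\<Sum>t\<in>UNIV - {0}. \<psi> t * cmul \<alpha> \<alpha> t *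
           (\<Prod>i\<in>{1..n}. hyp \<psi> [] [\<beta>s i] (lam i * t ^ 2 / 4)))"
      by (rule partC[OF two_nz[OF c2] n chars(1)])
  next
    fix lam :: "nat \<Rightarrow> 'a"
    show "gauss \<psi> \<alpha> * gauss \<psi> \<beta> * lauricella_C \<psi> n \<alpha> \<beta> \<gamma>s lam
      = (\<Sum>s\<in>UNIV - {0}. \<Sum>t\<in>UNIV - {0}. \<psi> (s + t) * \<alpha> s * \<beta> t *
           (\<Prod>i\<in>{1..n}. hyp \<psi> [] [\<gamma>s i] (lam i * s * t)))"
      by (rule partD[OF n chars(1) chars(2)])
  qed
qed

end
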